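(* Let $C$ be a subcubic chain of a graph $G$ and let $e$ be a cut-edge of $C$. Then $\delta(G,e)=\delta(G/C,e_{G/C})+\delta(\overline C,e_C)$ and $\widehat\delta(G,e)=\widehat\delta(G/C,e_{G/C})+\widehat\delta(\overline C,e_C)$.
   Context: Graphs are finite and may have loops and parallel edges unless called simple; a loop contributes 2 to the degree of its vertex, and a graph is subcubic if every vertex has degree at most 3. $n(G)$ is the number of vertices of $G$ and $n_2(G)$ the number of vertices of degree 2. A cycle is a connected 2-regular subgraph (so a loop, or a pair of parallel edges, forms a cycle). An even cover of $G$ is a spanning subgraph $F$ in which every vertex has degree 0 or 2; its excess is $\mathrm{exc}(F)=2c(F)+i(F)$, where $c(F)$ is the number of cycles and $i(F)$ the number of isolated vertices of $F$. For $e\in E(G)$, let $\mathcal E(G,e)$ (resp. $\widehat{\mathcal E}(G,e)$) be the set of even covers of $G$ containing (resp. not containing) $e$, and define $\mathrm{exc}(G,e)=\min_{F\in\mathcal E(G,e)}\mathrm{exc}(F)-2$, $\widehat{\mathrm{exc}}(G,e)=\min_{F\in\widehat{\mathcal E}(G,e)}\mathrm{exc}(F)$, $\delta(G,e)=\mathrm{exc}(G,e)-\frac{n(G)+n_2(G)}4$, $\widehat\delta(G,e)=\widehat{\mathrm{exc}}(G,e)-\frac{n(G)+n_2(G)}4$. A subcubic chain is a simple connected subcubic graph $C$ written as an alternating sequence $C=x e_0 B_1 e_1 B_2\cdots B_k e_k y$ ($k\ge 0$) such that: $\{e_0,\dots,e_k\}$ is exactly the set of cut-edges of $C$; the connected components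 of $C-\{e_0,\dots,e_k\}$ are $B_0,B_1,\dots,B_{k+1}$ with $V(B_0)=\{x\}$, $V(B_{k+1})=\{y\}$; each $B_i$ ($1\le i\le k$) is a single vertex or 2-connected; and $e_i$ joins a vertex of $B_i$ to a vertex of $B_{i+1}$ ($0\le i\le k$). Its endpoints are $x,y$ and its end edges are $e_0,e_k$. It is trivial if $k=0$. If $k\ge1$, let $x_1$ be the endpoint of $e_0$ in $B_1$ and $y_k$ the endpoint of $e_k$ in $B_k$; the closure of $C$ is $(\overline C,e_C)$ where $\overline C$ is obtained from $C-\{x,y\}$ by adding a new edge $e_C=x_1y_k$. If $G$ is a graph and $C=xe_0B_1\cdots B_ke_ky$ is a nontrivial subcubic chain contained in $G$ such that $C-\{x,y\}$ is a connected component of $G-\{e_0,e_k\}$, then $C$ is a subcubic chain of $G$; $G/C$ denotes the graph obtained from $G$ by deleting $V(C)\setminus\{x,y\}$ and adding a new edge $e_{G/C}$ joining $x$ and $y$. *)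

theory Defs
  imports Complex_Main "HOL-Library.Uprod" "HOL-Library.Extended_Real"
begin

text \<open>Finite multigraphs with loops and parallel edges: every edge has an unordered
  pair of endpoints (a loop has endpoints Upair v v).\<close>

record ('v, 'e) mgraph =
  verts :: "'v set"
  edges :: "'e set"
  ends  :: "'e \<Rightarrow> 'v uprod"

definition wf_graph :: "('v, 'e) mgraph \<Rightarrow> bool" where
  "wf_graph G \<longleftrightarrow> finite (verts G) \<and> finite (edges G) \<and>
     (\<forall>e\<in>edges G. set_uprod (ends G e) \<subseteq> verts G)"

text \<open>Degree of v in the spanning subgraph with edge set S (a loop counts 2).\<close>
definition degS :: "('v, 'e) mgraph \<Rightarrow> 'e set \<Rightarrow> 'v \<Rightarrow> nat" where
  "degS G S v = card {e\<in>S. v \<in> set_uprod (ends G e)} + card {e\<in>S. ends G e = Upair v v}"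

definition deg :: "('v, 'e) mgraph \<Rightarrow> 'v \<Rightarrow> nat" where
  "deg G v = degS G (edges G) v"

definition adjS :: "('v, 'e) mgraph \<Rightarrow> 'e set \<Rightarrow> 'v \<Rightarrow> 'v \<Rightarrow> bool" where
  "adjS G S u v \<longleftrightarrow> (\<exists>e\<in>S. ends G e = Upair u v)"

definition comps :: "('v, 'e) mgraph \<Rightarrow> 'e set \<Rightarrow> 'v set set" where
  "comps G S = {{v\<in>verts G. (adjS G S)\<^sup>*\<^sup>* u v} | u. u \<in> verts G}"

definition conn_on :: "('v, 'e) mgraph \<Rightarrow> 'e set \<Rightarrow> 'v set \<Rightarrow> bool" where
  "conn_on G S K \<longleftrightarrow> (\<forall>u\<in>K. \<forall>v\<in>K. (\<lambda>a b. a \<in> K \<and> b \<in> K \<and> adjS G S a b)\<^sup>*\<^sup>* u v)"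

definition connected_graph :: "('v, 'e) mgraph \<Rightarrow> bool" where
  "connected_graph G \<longleftrightarrow> verts G \<noteq> {} \<and> conn_on G (edges G) (verts G)"

definition two_connected_on :: "('v, 'e) mgraph \<Rightarrow> 'e set \<Rightarrow> 'v set \<Rightarrow> bool" where
  "two_connected_on G S K \<longleftrightarrow> card K \<ge> 3 \<and> conn_on G S K \<and> (\<forall>w\<in>K. conn_on G S (K - {w}))"

definition simple_graph :: "('v, 'e) mgraph \<Rightarrow> bool" where
  "simple_graph G \<longleftrightarrow> (\<forall>e\<in>edges G. card (set_uprod (ends G e)) = 2) \<and>
     (\<forall>e\<in>edges G. \<forall>f\<in>edges G. ends G e = ends G f \<longrightarrow> e = f)"

definition subcubic :: "('v, 'e) mgraph \<Rightarrow> bool" where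
  "subcubic G \<longleftrightarrow> (\<forall>v\<in>verts G. deg G v \<le> 3)"

definition cut_edge :: "('v, 'e) mgraph \<Rightarrow> 'e \<Rightarrow> bool" where
  "cut_edge G e \<longleftrightarrow> e \<in> edges G \<and> card (comps G (edges G - {e})) > card (comps G (edges G))"

definition subgraph :: "('v, 'e) mgraph \<Rightarrow> ('v, 'e) mgraph \<Rightarrow> bool" where
  "subgraph C G \<longleftrightarrow> verts C \<subseteq> verts G \<and> edges C \<subseteq> edges G \<and>
     (\<forall>e\<in>edges C. ends C e = ends G e)"

text \<open>Even covers, identified with their edge sets S (spanning subgraph (V(G),S)).\<close>
definition even_cover :: "('v, 'e) mgraph \<Rightarrow> 'e set \<Rightarrow> bool" where
  "even_cover G S \<longleftrightarrow> S \<subseteq> edges G \<and> (\<forall>v\<in>verts G. degS G S v = 0 \<or> degS G S v = 2)"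

text \<open>c(F): components containing an edge (each is a cycle); i(F): isolated vertices.\<close>
definition exc_of :: "('v, 'e) mgraph \<Rightarrow> 'e set \<Rightarrow> nat" where
  "exc_of G S = 2 * card {K\<in>comps G S. \<exists>v\<in>K. degS G S v \<noteq> 0}
               + card {v\<in>verts G. degS G S v = 0}"

text \<open>Minimum over an empty set is +infinity.\<close>
definition exc_with :: "('v, 'e) mgraph \<Rightarrow> 'e \<Rightarrow> ereal" where
  "exc_with G e = (INF S\<in>{S. even_cover G S \<and> e \<in> S}. ereal (real (exc_of G S))) - 2"

definition exc_without :: "('v, 'e) mgraph \<Rightarrow> 'e \<Rightarrow> ereal" where
  "exc_without G e = (INF S\<in>{S. even_cover G S \<and> e \<notin> S}. ereal (real (exc_of G S)))"

definition nn2 :: "('v, 'e) mgraph \<Rightarrow> real" where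
  "nn2 G = real (card (verts G)) + real (card {v\<in>verts G. deg G v = 2})"

definition delta :: "('v, 'e) mgraph \<Rightarrow> 'e \<Rightarrow> ereal" where
  "delta G e = exc_with G e - ereal (nn2 G / 4)"

definition delta_hat :: "('v, 'e) mgraph \<Rightarrow> 'e \<Rightarrow> ereal" where
  "delta_hat G e = exc_without G e - ereal (nn2 G / 4)"

text \<open>Subcubic chain C = x e_0 B_1 e_1 ... B_k e_k y, with es = [e_0,...,e_k]
  and Bs = [B_0,...,B_{k+1}] (vertex sets of the components of C - cut edges).\<close>
definition subcubic_chain ::
  "('v, 'e) mgraph \<Rightarrow> 'v \<Rightarrow> 'e list \<Rightarrow> 'v set list \<Rightarrow> 'v \<Rightarrow> bool" where
  "subcubic_chain C x es Bs y \<longleftrightarrow>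
     wf_graph C \<and> simple_graph C \<and> connected_graph C \<and> subcubic C \<and>
     es \<noteq> [] \<and> length Bs = length es + 1 \<and>
     distinct es \<and> set es = {e. cut_edge C e} \<and>
     distinct Bs \<and> set Bs = comps C (edges C - set es) \<and>
     hd Bs = {x} \<and> last Bs = {y} \<and>
     (\<forall>i. 1 \<le> i \<and> i < length Bs - 1 \<longrightarrow>
        card (Bs ! i) = 1 \<or> two_connected_on C (edges C - set es) (Bs ! i)) \<and>
     (\<forall>i<length es. \<exists>u\<in>Bs ! i. \<exists>v\<in>Bs ! (i + 1). ends C (es ! i) = Upair u v)"

definition chain_of ::
  "('v, 'e) mgraph \<Rightarrow> ('v, 'e) mgraph \<Rightarrow> 'v \<Rightarrow> 'e list \<Rightarrow> 'v set list \<Rightarrow> 'v \<Rightarrow> bool" where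
  "chain_of G C x es Bs y \<longleftrightarrow>
     subgraph C G \<and> subcubic_chain C x es Bs y \<and> length es \<ge> 2 \<and>
     verts C - {x, y} \<in> comps G (edges G - {hd es, last es}) \<and>
     {f\<in>edges C. set_uprod (ends C f) \<inter> {x, y} = {}} =
       {f\<in>edges G - {hd es, last es}. set_uprod (ends G f) \<subseteq> verts C - {x, y}}"

text \<open>Closure: C - {x,y} plus the new edge None joining x_1 and y_k.\<close>
definition closure_chain ::
  "('v, 'e) mgraph \<Rightarrow> 'v \<Rightarrow> 'e list \<Rightarrow> 'v \<Rightarrow> ('v, 'e option) mgraph" where
  "closure_chain C x es y =
     (let x1 = (THE u. ends C (hd es) = Upair x u);
          yk = (THE u. ends C (last es) = Upair u y)
      in \<lparr> verts = verts C - {x, y},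
           edges = insert None (Some ` {f\<in>edges C. set_uprod (ends C f) \<inter> {x, y} = {}}),
           ends = (\<lambda>oe. case oe of None \<Rightarrow> Upair x1 yk | Some f \<Rightarrow> ends C f) \<rparr>)"

text \<open>G/C: delete V(C) - {x,y} and add the new edge None joining x and y.\<close>
definition contract_chain ::
  "('v, 'e) mgraph \<Rightarrow> ('v, 'e) mgraph \<Rightarrow> 'v \<Rightarrow> 'v \<Rightarrow> ('v, 'e option) mgraph" where
  "contract_chain G C x y =
     \<lparr> verts = verts G - (verts C - {x, y}),
       edges = insert None (Some ` {f\<in>edges G. set_uprod (ends G f) \<inter> (verts C - {x, y}) = {}}),
       ends = (\<lambda>oe. case oe of None \<Rightarrow> Upair x y | Some f \<Rightarrow> ends G f) \<rparr>"

end

theory Submission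
  imports Defs
begin


definition inc :: "'v set \<Rightarrow> 'v uprod \<Rightarrow> nat" where
  "inc K u = card (set_uprod u \<inter> K) + (if \<exists>v\<in>K. u = Upair v v then 1 else 0)"

lemma inc_Upair: "inc K (Upair a b) = (if a \<in> K then 1 else 0) + (if b \<in> K then 1 else 0)"
  unfolding inc_def by (cases "a = b") (auto simp: card_insert_if Int_insert_left)

lemma card_filter_sum: "finite S \<Longrightarrow> card {e\<in>S. P e} = (\<Sum>e\<in>S. if P e then 1 else 0)"
  by (simp add: sum.If_cases Int_def conj_commute)

lemma sum_degS:
  assumes "finite S" "finite K"
  shows "(\<Sum>v\<in>K. degS H S v) = (\<Sum>f\<in>S. inc K (ends H f))"
proof -
  have 1: "(\<Sum>v\<in>K. card {e\<in>S. v \<in> set_uprod (ends H e)}) = (\<Sum>f\<in>S. card (set_uprod (ends H f) \<inter> K))"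
  proof -
    have "(\<Sum>v\<in>K. card {e\<in>S. v \<in> set_uprod (ends H e)})
        = (\<Sum>v\<in>K. \<Sum>e\<in>S. if v \<in> set_uprod (ends H e) then 1 else 0)"
      using assms by (simp add: card_filter_sum)
    also have "\<dots> = (\<Sum>e\<in>S. \<Sum>v\<in>K. if v \<in> set_uprod (ends H e) then 1 else 0)"
      by (rule sum.swap)
    also have "\<dots> = (\<Sum>f\<in>S. card (set_uprod (ends H f) \<inter> K))"
    proof (rule sum.cong[OF refl])
      fix f assume "f \<in> S"
      have "card (set_uprod (ends H f) \<inter> K) = card {v\<in>K. v \<in> set_uprod (ends H f)}"
        by (rule arg_cong[where f=card]) auto
      then show "(\<Sum>v\<in>K. if v \<in> set_uprod (ends H f) then 1 else 0::nat) = card (set_uprod (ends H f) \<inter> K)"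
        using assms by (simp add: card_filter_sum)
    qed
    finally show ?thesis .
  qed
  have 2: "(\<Sum>v\<in>K. card {e\<in>S. ends H e = Upair v v}) = (\<Sum>f\<in>S. if \<exists>v\<in>K. ends H f = Upair v v then 1 else 0)"
  proof -
    have "(\<Sum>v\<in>K. card {e\<in>S. ends H e = Upair v v})
        = (\<Sum>v\<in>K. \<Sum>e\<in>S. if ends H e = Upair v v then 1 else 0)"
      using assms by (simp add: card_filter_sum)
    also have "\<dots> = (\<Sum>e\<in>S. \<Sum>v\<in>K. if ends H e = Upair v v then 1 else 0)"
      by (rule sum.swap)
    also have "\<dots> = (\<Sum>f\<in>S. if \<exists>v\<in>K. ends H f = Upair v v then 1 else 0)"
    proof (rule sum.cong[OF refl])
      fix f assume "f \<in> S"
      show "(\<Sum>v\<in>K. if ends H f = Upair v v then 1 else 0::nat) = (if \<exists>v\<in>K. ends H f = Upair v v then 1 else 0)"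
      proof (cases "\<exists>v\<in>K. ends H f = Upair v v")
        case True
        then obtain v0 where v0: "v0 \<in> K" "ends H f = Upair v0 v0" by blast
        have "{v\<in>K. ends H f = Upair v v} = {v0}" using v0 by auto
        then have c1: "card {v\<in>K. ends H f = Upair v v} = 1" by simp
        have "(\<Sum>v\<in>K. if ends H f = Upair v v then 1 else 0::nat) = card {v\<in>K. ends H f = Upair v v}"
          using assms by (simp add: card_filter_sum)
        then show ?thesis using True c1 by (simp add: One_nat_def)
      next
        case False
        then show ?thesis by auto
      qed
    qed
    finally show ?thesis .
  qed
  show ?thesis unfolding degS_def inc_def using 1 2 by (simp add: sum.distrib)
qed

lemma degS_sum: "finite S \<Longrightarrow> degS H S v = (\<Sum>f\<in>S. inc {v} (ends H f))"
  using sum_degS[of S "{v}" H] by simp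

lemma even_sum_card: "finite S \<Longrightarrow> even (sum (g::'a\<Rightarrow>nat) S) \<longleftrightarrow> even (card {x\<in>S. odd (g x)})"
proof (induction S rule: finite_induct)
  case empty then show ?case by simp
next
  case (insert a S)
  have fin: "finite {x\<in>S. odd (g x)}" using insert by simp
  show ?case
  proof (cases "odd (g a)")
    case True
    then have "{x\<in>insert a S. odd (g x)} = insert a {x\<in>S. odd (g x)}" by auto
    then show ?thesis using insert True fin by auto
  next
    case False
    then have "{x\<in>insert a S. odd (g x)} = {x\<in>S. odd (g x)}" by auto
    then show ?thesis using insert False by auto
  qed
qed

lemma odd_inc: "odd (inc K (Upair a b)) \<longleftrightarrow> (a \<in> K \<longleftrightarrow> b \<notin> K)"
  by (simp add: inc_Upair)

lemma parity:
  assumes "finite S" "finite K" "\<forall>v\<in>K. even (degS H S v)"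
  shows "even (card {f\<in>S. odd (inc K (ends H f))})"
proof -
  have "even (\<Sum>v\<in>K. degS H S v)" using assms(3) by (intro dvd_sum) auto
  then have "even (\<Sum>f\<in>S. inc K (ends H f))" unfolding sum_degS[OF assms(1,2)] .
  then show ?thesis using even_sum_card[OF assms(1), of "\<lambda>f. inc K (ends H f)"] by simp
qed

lemma adjS_sym: "adjS H S a b \<longleftrightarrow> adjS H S b a"
proof -
  have "Upair a b = Upair b a" by simp
  then show ?thesis unfolding adjS_def by metis
qed

lemma R_sym: "(adjS H S)\<^sup>*\<^sup>* a b \<Longrightarrow> (adjS H S)\<^sup>*\<^sup>* b a"
proof (induction rule: rtranclp_induct)
  case base then show ?case by simp
next
  case (step b c)
  then have "adjS H S c b" using adjS_sym by metis
  then show ?case using step(3) by (rule converse_rtranclp_into_rtranclp)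
qed

lemma R_mono: "(adjS H S)\<^sup>*\<^sup>* a b \<Longrightarrow> S \<subseteq> T \<Longrightarrow> (adjS H T)\<^sup>*\<^sup>* a b"
proof (induction rule: rtranclp_induct)
  case base then show ?case by simp
next
  case (step b c)
  then have "adjS H T b c" unfolding adjS_def by blast
  then show ?case using step by (meson rtranclp.rtrancl_into_rtrancl)
qed

definition cls :: "('v,'e) mgraph \<Rightarrow> 'e set \<Rightarrow> 'v \<Rightarrow> 'v set" where
  "cls H S u = {v\<in>verts H. (adjS H S)\<^sup>*\<^sup>* u v}"

lemma comps_cls: "comps H S = cls H S ` verts H"
  unfolding comps_def cls_def by auto

lemma cls_eq: "(adjS H S)\<^sup>*\<^sup>* u v \<Longrightarrow> cls H S u = cls H S v"
  unfolding cls_def by (auto) (meson R_sym rtranclp_trans)+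

lemma cls_self: "u \<in> verts H \<Longrightarrow> u \<in> cls H S u"
  unfolding cls_def by auto

lemma comps_disj: "K1 \<in> comps H S \<Longrightarrow> K2 \<in> comps H S \<Longrightarrow> v \<in> K1 \<Longrightarrow> v \<in> K2 \<Longrightarrow> K1 = K2"
proof -
  assume a: "K1 \<in> comps H S" "K2 \<in> comps H S" "v \<in> K1" "v \<in> K2"
  then obtain u1 u2 where u: "K1 = cls H S u1" "K2 = cls H S u2" by (auto simp: comps_cls)
  have "(adjS H S)\<^sup>*\<^sup>* u1 v" "(adjS H S)\<^sup>*\<^sup>* u2 v" using a u by (auto simp: cls_def)
  then have "(adjS H S)\<^sup>*\<^sup>* u1 u2" by (meson R_sym rtranclp_trans)
  then show ?thesis using u cls_eq by metis
qed

lemma bridge: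
  assumes wf: "wf_graph H" and ec: "even_cover H S" and f: "f \<in> S" and ef: "ends H f = Upair a b"
  shows "(adjS H (S - {f}))\<^sup>*\<^sup>* a b"
proof (rule ccontr)
  assume nab: "\<not> ?thesis"
  let ?R = "(adjS H (S - {f}))\<^sup>*\<^sup>*"
  define K where "K = {v\<in>verts H. ?R a v}"
  have SE: "S \<subseteq> edges H" using ec by (simp add: even_cover_def)
  have finS: "finite S" using wf SE by (auto simp: wf_graph_def intro: finite_subset)
  have finK: "finite K" using wf by (auto simp: wf_graph_def K_def)
  have "set_uprod (ends H f) \<subseteq> verts H" using wf f SE by (auto simp: wf_graph_def)
  then have abV: "a \<in> verts H" "b \<in> verts H" using ef by auto
  have aK: "a \<in> K" using abV by (simp add: K_def)
  have bK: "b \<notin> K" using nab by (simp add: K_def)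
  have ev: "\<forall>v\<in>K. even (degS H S v)" using ec by (auto simp: even_cover_def K_def)
  have "{g\<in>S. odd (inc K (ends H g))} = {f}"
  proof
    show "{f} \<subseteq> {g\<in>S. odd (inc K (ends H g))}" using f ef aK bK by (simp add: odd_inc)
  next
    show "{g\<in>S. odd (inc K (ends H g))} \<subseteq> {f}"
    proof
      fix g assume g: "g \<in> {g\<in>S. odd (inc K (ends H g))}"
      obtain c d where cd: "ends H g = Upair c d" by (cases "ends H g") auto
      have "set_uprod (ends H g) \<subseteq> verts H" using wf g SE by (auto simp: wf_graph_def)
      then have cdV: "c \<in> verts H" "d \<in> verts H" using cd by auto
      show "g \<in> {f}"
      proof (rule ccontr)
        assume "g \<notin> {f}"
        then have adj: "adjS H (S - {f}) c d" "adjS H (S - {f}) d c"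
          using g cd unfolding adjS_def by (auto intro!: bexI[of _ g] simp: Upair_inject)
        have "c \<in> K \<longleftrightarrow> d \<in> K" using adj cdV unfolding K_def by (auto intro: rtranclp.rtrancl_into_rtrancl)
        then show False using g cd by (simp add: odd_inc)
      qed
    qed
  qed
  with parity[OF finS finK ev] show False by simp
qed



lemma inc_zero: "v \<notin> set_uprod u \<Longrightarrow> inc {v} u = 0"
  by (cases u) (auto simp: inc_Upair)

definition opt :: "bool \<Rightarrow> 'a option set" where
  "opt b = (if b then {None} else {})"

lemma sum_opt: "finite A \<Longrightarrow> sum g (opt b \<union> Some ` A) = (if b then g None else 0) + sum (g \<circ> Some) A"
  by (cases b) (auto simp: opt_def sum.reindex)

lemma finite_opt[simp]: "finite (opt b)" by (simp add: opt_def)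

locale glue =
  fixes G :: "('v,'e) mgraph" and Gc Cb :: "('v,'e option) mgraph"
    and W :: "'v set" and x y x1 yk :: 'v and e0 ek :: 'e and Eout Ein :: "'e set"
  assumes wf: "wf_graph G"
    and WV: "W \<subseteq> verts G" and xV: "x \<in> verts G" and yV: "y \<in> verts G"
    and xW: "x \<notin> W" and yW: "y \<notin> W" and xy: "x \<noteq> y" and x1W: "x1 \<in> W" and ykW: "yk \<in> W"
    and e0E: "e0 \<in> edges G" and ekE: "ek \<in> edges G" and e0ek: "e0 \<noteq> ek"
    and ends_e0: "ends G e0 = Upair x x1" and ends_ek: "ends G ek = Upair yk y"
    and split: "\<And>f. f \<in> edges G \<Longrightarrow> f \<noteq> e0 \<Longrightarrow> f \<noteq> ek \<Longrightarrow>
                  set_uprod (ends G f) \<subseteq> W \<or> set_uprod (ends G f) \<inter> W = {}"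
    and Eout_def: "Eout = {f\<in>edges G. set_uprod (ends G f) \<inter> W = {}}"
    and Ein_def: "Ein = {f\<in>edges G - {e0,ek}. set_uprod (ends G f) \<subseteq> W}"
    and Gc_V: "verts Gc = verts G - W" and Gc_E: "edges Gc = insert None (Some ` Eout)"
    and Gc_None: "ends Gc None = Upair x y" and Gc_Some: "\<And>f. f \<in> Eout \<Longrightarrow> ends Gc (Some f) = ends G f"
    and Cb_V: "verts Cb = W" and Cb_E: "edges Cb = insert None (Some ` Ein)"
    and Cb_None: "ends Cb None = Upair x1 yk" and Cb_Some: "\<And>f. f \<in> Ein \<Longrightarrow> ends Cb (Some f) = ends G f"
begin

lemma finE: "finite (edges G)" and finV: "finite (verts G)"
  using wf by (auto simp: wf_graph_def)

lemma endsV: "f \<in> edges G \<Longrightarrow> set_uprod (ends G f) \<subseteq> verts G"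
  using wf by (auto simp: wf_graph_def)

lemma e0_notin: "e0 \<notin> Eout" "e0 \<notin> Ein" "ek \<notin> Eout" "ek \<notin> Ein"
  using x1W ykW by (auto simp: Eout_def Ein_def ends_e0 ends_ek)

lemma EoutE: "Eout \<subseteq> edges G" and EinE: "Ein \<subseteq> edges G"
  by (auto simp: Eout_def Ein_def)

lemma Eout_Ein: "Eout \<inter> Ein = {}"
proof -
  { fix f assume f: "f \<in> Eout" "f \<in> Ein"
    obtain a b where ab: "ends G f = Upair a b" by (cases "ends G f") auto
    have False using f ab by (auto simp: Eout_def Ein_def) }
  then show ?thesis by blast
qed

lemma edges_part: "f \<in> edges G \<Longrightarrow> f \<in> Eout \<or> f \<in> Ein \<or> f = e0 \<or> f = ek"
  using split[of f] by (auto simp: Eout_def Ein_def)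

lemma wf_Gc: "wf_graph Gc"
proof -
  have "\<forall>e\<in>edges Gc. set_uprod (ends Gc e) \<subseteq> verts Gc"
  proof
    fix g assume "g \<in> edges Gc"
    then consider "g = None" | f where "g = Some f" "f \<in> Eout" using Gc_E by auto
    then show "set_uprod (ends Gc g) \<subseteq> verts Gc"
    proof cases
      case 1 then show ?thesis using Gc_None Gc_V xV yV xW yW by auto
    next
      case 2 then show ?thesis using Gc_Some[of f] Gc_V endsV[of f] EoutE by (auto simp: Eout_def)
    qed
  qed
  moreover have "finite (edges Gc)" using Gc_E finE EoutE by (auto intro: finite_subset)
  ultimately show ?thesis using finV Gc_V by (simp add: wf_graph_def)
qed

lemma wf_Cb: "wf_graph Cb"
proof -
  have "\<forall>e\<in>edges Cb. set_uprod (ends Cb e) \<subseteq> verts Cb"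
  proof
    fix g assume "g \<in> edges Cb"
    then consider "g = None" | f where "g = Some f" "f \<in> Ein" using Cb_E by auto
    then show "set_uprod (ends Cb g) \<subseteq> verts Cb"
    proof cases
      case 1 then show ?thesis using Cb_None Cb_V x1W ykW by auto
    next
      case 2 then show ?thesis using Cb_Some[of f] Cb_V by (auto simp: Ein_def)
    qed
  qed
  moreover have "finite (edges Cb)" using Cb_E finE EinE by (auto intro: finite_subset)
  ultimately show ?thesis using finV Cb_V WV by (auto simp: wf_graph_def intro: finite_subset)
qed

definition T1 :: "'e set \<Rightarrow> 'e option set" where
  "T1 S = opt (e0 \<in> S) \<union> Some ` (S \<inter> Eout)"
definition T2 :: "'e set \<Rightarrow> 'e option set" where
  "T2 S = opt (e0 \<in> S) \<union> Some ` (S \<inter> Ein)"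

lemma sum_split:
  assumes "S \<subseteq> edges G"
  shows "sum g S = sum g (S \<inter> Eout) + sum g (S \<inter> Ein) + sum g (S \<inter> {e0,ek})"
proof -
  have fin: "finite S" using assms finE by (auto intro: finite_subset)
  have "sum g S = sum g (S \<inter> Eout) + sum g (S - Eout)" by (rule sum.Int_Diff[OF fin])
  also have "sum g (S - Eout) = sum g ((S - Eout) \<inter> Ein) + sum g ((S - Eout) - Ein)"
    by (rule sum.Int_Diff) (use fin in auto)
  also have "(S - Eout) \<inter> Ein = S \<inter> Ein" using Eout_Ein by auto
  also have "(S - Eout) - Ein = S \<inter> {e0,ek}" using assms edges_part e0_notin by blast
  finally show ?thesis by (simp add: add.assoc)
qed

lemma sum_e0ek: "(e0 \<in> S \<longleftrightarrow> ek \<in> S) \<Longrightarrow> sum g (S \<inter> {e0,ek}) = (if e0 \<in> S then g e0 + g ek else 0)"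
  using e0ek by (cases "e0 \<in> S") auto

lemma deg1:
  assumes S: "S \<subseteq> edges G" and b: "e0 \<in> S \<longleftrightarrow> ek \<in> S" and v: "v \<notin> W"
  shows "degS Gc (T1 S) v = degS G S v"
proof -
  have fin: "finite S" using S finE by (auto intro: finite_subset)
  have "degS G S v = (\<Sum>f\<in>S. inc {v} (ends G f))" by (rule degS_sum[OF fin])
  also have "\<dots> = (\<Sum>f\<in>S \<inter> Eout. inc {v} (ends G f)) + (\<Sum>f\<in>S \<inter> Ein. inc {v} (ends G f))
        + (\<Sum>f\<in>S \<inter> {e0,ek}. inc {v} (ends G f))" by (rule sum_split[OF S])
  also have "(\<Sum>f\<in>S \<inter> Ein. inc {v} (ends G f)) = 0"
    using v by (intro sum.neutral) (auto simp: Ein_def intro!: inc_zero)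
  also have "(\<Sum>f\<in>S \<inter> {e0,ek}. inc {v} (ends G f)) = (if e0 \<in> S then inc {v} (ends G e0) + inc {v} (ends G ek) else 0)"
    by (rule sum_e0ek[OF b])
  also have "\<dots> = (if e0 \<in> S then inc {v} (Upair x y) else 0)"
    using v x1W ykW by (auto simp: ends_e0 ends_ek inc_Upair)
  finally have 1: "degS G S v = (\<Sum>f\<in>S \<inter> Eout. inc {v} (ends G f)) + (if e0 \<in> S then inc {v} (Upair x y) else 0)"
    by simp
  have "degS Gc (T1 S) v = (\<Sum>g\<in>T1 S. inc {v} (ends Gc g))"
    by (rule degS_sum) (use fin in \<open>simp add: T1_def\<close>)
  also have "\<dots> = (if e0 \<in> S then inc {v} (Upair x y) else 0) + (\<Sum>f\<in>S \<inter> Eout. inc {v} (ends Gc (Some f)))"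
    unfolding T1_def using fin by (subst sum_opt) (auto simp: Gc_None)
  also have "(\<Sum>f\<in>S \<inter> Eout. inc {v} (ends Gc (Some f))) = (\<Sum>f\<in>S \<inter> Eout. inc {v} (ends G f))"
    by (rule sum.cong) (auto simp: Gc_Some)
  finally show ?thesis using 1 by simp
qed

lemma deg2:
  assumes S: "S \<subseteq> edges G" and b: "e0 \<in> S \<longleftrightarrow> ek \<in> S" and v: "v \<in> W"
  shows "degS Cb (T2 S) v = degS G S v"
proof -
  have fin: "finite S" using S finE by (auto intro: finite_subset)
  have "degS G S v = (\<Sum>f\<in>S. inc {v} (ends G f))" by (rule degS_sum[OF fin])
  also have "\<dots> = (\<Sum>f\<in>S \<inter> Eout. inc {v} (ends G f)) + (\<Sum>f\<in>S \<inter> Ein. inc {v} (ends G f))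
        + (\<Sum>f\<in>S \<inter> {e0,ek}. inc {v} (ends G f))" by (rule sum_split[OF S])
  also have "(\<Sum>f\<in>S \<inter> Eout. inc {v} (ends G f)) = 0"
    using v by (intro sum.neutral) (auto simp: Eout_def intro!: inc_zero)
  also have "(\<Sum>f\<in>S \<inter> {e0,ek}. inc {v} (ends G f)) = (if e0 \<in> S then inc {v} (ends G e0) + inc {v} (ends G ek) else 0)"
    by (rule sum_e0ek[OF b])
  also have "\<dots> = (if e0 \<in> S then inc {v} (Upair x1 yk) else 0)"
    using v xW yW by (auto simp: ends_e0 ends_ek inc_Upair)
  finally have 1: "degS G S v = (\<Sum>f\<in>S \<inter> Ein. inc {v} (ends G f)) + (if e0 \<in> S then inc {v} (Upair x1 yk) else 0)"
    by simp
  have "degS Cb (T2 S) v = (\<Sum>g\<in>T2 S. inc {v} (ends Cb g))"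
    by (rule degS_sum) (use fin in \<open>simp add: T2_def\<close>)
  also have "\<dots> = (if e0 \<in> S then inc {v} (Upair x1 yk) else 0) + (\<Sum>f\<in>S \<inter> Ein. inc {v} (ends Cb (Some f)))"
    unfolding T2_def using fin by (subst sum_opt) (auto simp: Cb_None)
  also have "(\<Sum>f\<in>S \<inter> Ein. inc {v} (ends Cb (Some f))) = (\<Sum>f\<in>S \<inter> Ein. inc {v} (ends G f))"
    by (rule sum.cong) (auto simp: Cb_Some)
  finally show ?thesis using 1 by simp
qed

lemma e0_ek_cover:
  assumes ec: "even_cover G S"
  shows "e0 \<in> S \<longleftrightarrow> ek \<in> S"
proof -
  have S: "S \<subseteq> edges G" using ec by (simp add: even_cover_def)
  have fin: "finite S" using S finE by (auto intro: finite_subset)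
  have finW: "finite W" using WV finV by (auto intro: finite_subset)
  have ev: "\<forall>v\<in>W. even (degS G S v)"
  proof
    fix v assume "v \<in> W"
    then have "degS G S v = 0 \<or> degS G S v = 2" using ec WV by (auto simp: even_cover_def)
    then show "even (degS G S v)" by auto
  qed
  have "{f\<in>S. odd (inc W (ends G f))} = S \<inter> {e0,ek}"
  proof (intro set_eqI iffI)
    fix f assume f: "f \<in> {f\<in>S. odd (inc W (ends G f))}"
    obtain a b where ab: "ends G f = Upair a b" by (cases "ends G f") auto
    show "f \<in> S \<inter> {e0,ek}"
    proof (rule ccontr)
      assume "f \<notin> S \<inter> {e0,ek}"
      then have "set_uprod (ends G f) \<subseteq> W \<or> set_uprod (ends G f) \<inter> W = {}" using f S split by auto
      then show False using f ab by (auto simp: odd_inc)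
    qed
  next
    fix f assume "f \<in> S \<inter> {e0,ek}"
    then show "f \<in> {f\<in>S. odd (inc W (ends G f))}" using xW yW x1W ykW
      by (auto simp: ends_e0 ends_ek inc_Upair)
  qed
  then have "even (card (S \<inter> {e0,ek}))" using parity[OF fin finW ev] by simp
  then show ?thesis using e0ek by (cases "e0 \<in> S"; cases "ek \<in> S") auto
qed

end


context glue begin

lemma T1_E: "S \<subseteq> edges G \<Longrightarrow> T1 S \<subseteq> edges Gc"
  by (auto simp: T1_def Gc_E opt_def split: if_splits)
lemma T2_E: "S \<subseteq> edges G \<Longrightarrow> T2 S \<subseteq> edges Cb"
  by (auto simp: T2_def Cb_E opt_def split: if_splits)

lemma None_T1: "None \<in> T1 S \<longleftrightarrow> e0 \<in> S" by (auto simp: T1_def opt_def)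
lemma None_T2: "None \<in> T2 S \<longleftrightarrow> e0 \<in> S" by (auto simp: T2_def opt_def)
lemma Some_T1: "Some f \<in> T1 S \<longleftrightarrow> f \<in> S \<and> f \<in> Eout" by (auto simp: T1_def opt_def)
lemma Some_T2: "Some f \<in> T2 S \<longleftrightarrow> f \<in> S \<and> f \<in> Ein" by (auto simp: T2_def opt_def)

lemma ec_split:
  assumes ec: "even_cover G S"
  shows "even_cover Gc (T1 S)" "even_cover Cb (T2 S)"
proof -
  have S: "S \<subseteq> edges G" using ec by (simp add: even_cover_def)
  have b: "e0 \<in> S \<longleftrightarrow> ek \<in> S" by (rule e0_ek_cover[OF ec])
  show "even_cover Gc (T1 S)"
    unfolding even_cover_def using T1_E[OF S] deg1[OF S b] ec Gc_V by (auto simp: even_cover_def)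
  show "even_cover Cb (T2 S)"
    unfolding even_cover_def using T2_E[OF S] deg2[OF S b] ec Cb_V WV by (auto simp: even_cover_def)
qed

definition glue :: "'e option set \<Rightarrow> 'e option set \<Rightarrow> 'e set" where
  "glue A B = {f. Some f \<in> A} \<union> {f. Some f \<in> B} \<union> (if None \<in> A then {e0,ek} else {})"

lemma glue_props:
  assumes A: "A \<subseteq> edges Gc" and B: "B \<subseteq> edges Cb" and N: "None \<in> A \<longleftrightarrow> None \<in> B"
  shows "glue A B \<subseteq> edges G" "e0 \<in> glue A B \<longleftrightarrow> None \<in> A" "ek \<in> glue A B \<longleftrightarrow> None \<in> A"
    "T1 (glue A B) = A" "T2 (glue A B) = B"
proof -
  have sA: "Some f \<in> A \<Longrightarrow> f \<in> Eout" for f using A Gc_E by auto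
  have sB: "Some f \<in> B \<Longrightarrow> f \<in> Ein" for f using B Cb_E by auto
  show "glue A B \<subseteq> edges G" using sA sB EoutE EinE e0E ekE by (auto simp: glue_def)
  show e0: "e0 \<in> glue A B \<longleftrightarrow> None \<in> A" using sA sB e0_notin by (auto simp: glue_def)
  show "ek \<in> glue A B \<longleftrightarrow> None \<in> A" using sA sB e0_notin by (auto simp: glue_def)
  show "T1 (glue A B) = A"
  proof (intro set_eqI)
    fix g show "g \<in> T1 (glue A B) \<longleftrightarrow> g \<in> A"
      using sA sB e0_notin Eout_Ein e0 by (cases g) (auto simp: None_T1 Some_T1 glue_def)
  qed
  show "T2 (glue A B) = B"
  proof (intro set_eqI)
    fix g show "g \<in> T2 (glue A B) \<longleftrightarrow> g \<in> B"
      using sA sB e0_notin Eout_Ein e0 N by (cases g) (auto simp: None_T2 Some_T2 glue_def)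
  qed
qed

lemma ec_glue:
  assumes A: "even_cover Gc A" and B: "even_cover Cb B" and N: "None \<in> A \<longleftrightarrow> None \<in> B"
  shows "even_cover G (glue A B)"
proof -
  have AE: "A \<subseteq> edges Gc" and BE: "B \<subseteq> edges Cb" using A B by (auto simp: even_cover_def)
  note gp = glue_props[OF AE BE N]
  let ?S = "glue A B"
  have b: "e0 \<in> ?S \<longleftrightarrow> ek \<in> ?S" using gp by simp
  have "degS G ?S v = 0 \<or> degS G ?S v = 2" if v: "v \<in> verts G" for v
  proof (cases "v \<in> W")
    case True
    then have "degS G ?S v = degS Cb B v" using deg2[OF gp(1) b] gp(5) by simp
    then show ?thesis using B True Cb_V by (auto simp: even_cover_def)
  next
    case False
    then have "degS G ?S v = degS Gc A v" using deg1[OF gp(1) b] gp(4) by simp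
    then show ?thesis using A False Gc_V v by (auto simp: even_cover_def)
  qed
  then show ?thesis using gp(1) by (simp add: even_cover_def)
qed

abbreviation R where "R S \<equiv> (adjS G S)\<^sup>*\<^sup>*"
abbreviation R1 where "R1 S \<equiv> (adjS Gc (T1 S))\<^sup>*\<^sup>*"
abbreviation R2 where "R2 S \<equiv> (adjS Cb (T2 S))\<^sup>*\<^sup>*"

lemma step_cases:
  assumes S: "S \<subseteq> edges G" and adj: "adjS G S a b"
  obtains f where "f \<in> S" "f \<in> Eout" "ends G f = Upair a b"
  | f where "f \<in> S" "f \<in> Ein" "ends G f = Upair a b"
  | "e0 \<in> S" "Upair a b = Upair x x1"
  | "ek \<in> S" "Upair a b = Upair yk y"
proof -
  obtain f where f: "f \<in> S" "ends G f = Upair a b" using adj by (auto simp: adjS_def)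
  have "f \<in> edges G" using f S by auto
  from edges_part[OF this] show ?thesis
  proof (elim disjE)
    assume "f = e0" then show ?thesis using f ends_e0 that(3) by (simp; blast)
  next
    assume "f = ek" then show ?thesis using f ends_ek that(4) by (simp; blast)
  qed (use f that in auto)
qed

lemma adj1: "f \<in> S \<Longrightarrow> f \<in> Eout \<Longrightarrow> ends G f = Upair a b \<Longrightarrow> adjS Gc (T1 S) a b"
  unfolding adjS_def by (rule bexI[of _ "Some f"]) (auto simp: Some_T1 Gc_Some)
lemma adj2: "f \<in> S \<Longrightarrow> f \<in> Ein \<Longrightarrow> ends G f = Upair a b \<Longrightarrow> adjS Cb (T2 S) a b"
  unfolding adjS_def by (rule bexI[of _ "Some f"]) (auto simp: Some_T2 Cb_Some)
lemma adj1N: "e0 \<in> S \<Longrightarrow> adjS Gc (T1 S) x y"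
  unfolding adjS_def by (rule bexI[of _ None]) (auto simp: None_T1 Gc_None)
lemma adj2N: "e0 \<in> S \<Longrightarrow> adjS Cb (T2 S) x1 yk"
  unfolding adjS_def by (rule bexI[of _ None]) (auto simp: None_T2 Cb_None)

lemma adj_e0: "e0 \<in> S \<Longrightarrow> adjS G S x x1"
  unfolding adjS_def using ends_e0 by blast
lemma adj_ek: "ek \<in> S \<Longrightarrow> adjS G S yk y"
  unfolding adjS_def using ends_ek by blast

lemma r_step: "r a b \<Longrightarrow> r\<^sup>*\<^sup>* a b" by auto

lemma upair_cases: "Upair a b = Upair c d \<Longrightarrow> (a = c \<and> b = d) \<or> (a = d \<and> b = c)" by simp

definition pi where "pi w = (if w \<in> W then x else w)"
definition rho where "rho w = (if w \<in> W then w else x1)"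

lemma proj:
  assumes S: "S \<subseteq> edges G" and e0S: "e0 \<in> S" and r: "R S a c"
  shows "R1 S (pi a) (pi c) \<and> R2 S (rho a) (rho c)"
  using r
proof (induction rule: rtranclp_induct)
  case base then show ?case by simp
next
  case (step b c)
  have N1: "R1 S x y" "R1 S y x" using adj1N[OF e0S] adjS_sym by (metis r_step)+
  have N2: "R2 S x1 yk" "R2 S yk x1" using adj2N[OF e0S] adjS_sym by (metis r_step)+
  have "R1 S (pi b) (pi c) \<and> R2 S (rho b) (rho c)"
  proof (cases rule: step_cases[OF S step(2)])
    case (1 f)
    then have "b \<notin> W" "c \<notin> W" by (auto simp: Eout_def)
    then show ?thesis using adj1[OF 1] by (auto simp: pi_def rho_def)
  next
    case (2 f)
    then have "b \<in> W" "c \<in> W" by (auto simp: Ein_def)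
    then show ?thesis using adj2[OF 2] by (auto simp: pi_def rho_def)
  next
    case 3
    then show ?thesis using xW x1W by (auto simp: pi_def rho_def)
  next
    case 4
    then show ?thesis using yW ykW N1 N2 by (auto simp: pi_def rho_def)
  qed
  then show ?case using step(3) by (meson rtranclp_trans)
qed

lemma proj0:
  assumes S: "S \<subseteq> edges G" and e0S: "e0 \<notin> S" "ek \<notin> S" and r: "R S a c"
  shows "(a \<in> W \<longleftrightarrow> c \<in> W) \<and> (a \<notin> W \<longrightarrow> R1 S a c) \<and> (a \<in> W \<longrightarrow> R2 S a c)"
  using r
proof (induction rule: rtranclp_induct)
  case base then show ?case by simp
next
  case (step b c)
  show ?case
  proof (cases rule: step_cases[OF S step(2)])
    case (1 f)
    then have "b \<notin> W" "c \<notin> W" by (auto simp: Eout_def)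
    then show ?thesis using adj1[OF 1] step(3) by (meson rtranclp.rtrancl_into_rtrancl)
  next
    case (2 f)
    then have "b \<in> W" "c \<in> W" by (auto simp: Ein_def)
    then show ?thesis using adj2[OF 2] step(3) by (meson rtranclp.rtrancl_into_rtrancl)
  next
    case 3 then show ?thesis using e0S by simp
  next
    case 4 then show ?thesis using e0S by simp
  qed
qed

lemma lift1:
  assumes S: "S \<subseteq> edges G" and T: "T \<subseteq> T1 S" and N: "None \<in> T \<Longrightarrow> R S x y"
    and r: "(adjS Gc T)\<^sup>*\<^sup>* a b"
  shows "R S a b"
  using r
proof (induction rule: rtranclp_induct)
  case base then show ?case by simp
next
  case (step b c)
  obtain g where g: "g \<in> T" "ends Gc g = Upair b c" using step(2) by (auto simp: adjS_def)
  have "R S b c"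
  proof (cases g)
    case None
    then have "ends Gc None = Upair b c" using g by simp
    then have "Upair x y = Upair b c" unfolding Gc_None .
    then have "(b = x \<and> c = y) \<or> (b = y \<and> c = x)" unfolding Upair_inject by blast
    moreover have r: "R S x y" using N g(1) None by blast
    ultimately show ?thesis
    proof (elim disjE conjE)
      assume "b = x" "c = y" then show ?thesis using r by simp
    next
      assume "b = y" "c = x" then show ?thesis using R_sym[OF r] by simp
    qed
  next
    case (Some f)
    then have "f \<in> S" "f \<in> Eout" using g T by (auto simp: Some_T1)
    then have "adjS G S b c" using g Some Gc_Some unfolding adjS_def by auto
    then show ?thesis by auto
  qed
  then show ?case using step(3) by (meson rtranclp_trans)
qed

lemma lift2:
  assumes S: "S \<subseteq> edges G" and T: "T \<subseteq> T2 S" and N: "None \<in> T \<Longrightarrow> R S x1 yk"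
    and r: "(adjS Cb T)\<^sup>*\<^sup>* a b"
  shows "R S a b"
  using r
proof (induction rule: rtranclp_induct)
  case base then show ?case by simp
next
  case (step b c)
  obtain g where g: "g \<in> T" "ends Cb g = Upair b c" using step(2) by (auto simp: adjS_def)
  have "R S b c"
  proof (cases g)
    case None
    then have "ends Cb None = Upair b c" using g by simp
    then have "Upair x1 yk = Upair b c" unfolding Cb_None .
    then have "(b = x1 \<and> c = yk) \<or> (b = yk \<and> c = x1)" unfolding Upair_inject by blast
    moreover have r: "R S x1 yk" using N g(1) None by blast
    ultimately show ?thesis
    proof (elim disjE conjE)
      assume "b = x1" "c = yk" then show ?thesis using r by simp
    next
      assume "b = yk" "c = x1" then show ?thesis using R_sym[OF r] by simp
    qed
  next
    case (Some f)
    then have "f \<in> S" "f \<in> Ein" using g T by (auto simp: Some_T2)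
    then have "adjS G S b c" using g Some Cb_Some unfolding adjS_def by auto
    then show ?thesis by auto
  qed
  then show ?case using step(3) by (meson rtranclp_trans)
qed

lemma Rxy:
  assumes ec: "even_cover G S" and e0S: "e0 \<in> S"
  shows "R S x y" "R S x1 yk"
proof -
  have S: "S \<subseteq> edges G" using ec by (simp add: even_cover_def)
  have ekS: "ek \<in> S" using e0_ek_cover[OF ec] e0S by simp
  have br: "(adjS Gc (T1 S - {None}))\<^sup>*\<^sup>* x y"
    by (rule bridge[OF wf_Gc ec_split(1)[OF ec]]) (auto simp: None_T1 e0S Gc_None)
  show xy: "R S x y" by (rule lift1[OF S _ _ br]) auto
  have "R S x1 x" using adj_e0[OF e0S] adjS_sym by (metis r_step)
  moreover have "R S y yk" using adj_ek[OF ekS] adjS_sym by (metis r_step)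
  ultimately show "R S x1 yk" using xy by (meson rtranclp_trans)
qed

end


definition NT :: "('v,'e) mgraph \<Rightarrow> 'e set \<Rightarrow> 'v set set" where
  "NT H T = {K\<in>comps H T. \<exists>v\<in>K. degS H T v \<noteq> 0}"

lemma exc_NT: "exc_of H T = 2 * card (NT H T) + card {v\<in>verts H. degS H T v = 0}"
  by (simp add: exc_of_def NT_def)

lemma comps_sub: "K \<in> comps H T \<Longrightarrow> K \<subseteq> verts H"
  by (auto simp: comps_cls cls_def)
lemma comps_ne: "K \<in> comps H T \<Longrightarrow> K \<noteq> {}"
  by (auto simp: comps_cls dest: cls_self)
lemma finite_comps: "finite (verts H) \<Longrightarrow> finite (comps H T)"
  by (simp add: comps_cls)
lemma finite_NT: "finite (verts H) \<Longrightarrow> finite (NT H T)"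
  by (simp add: NT_def finite_comps)

lemma degS_pos:
  assumes "finite S" "f \<in> S" "v \<in> set_uprod (ends H f)"
  shows "degS H S v \<noteq> 0"
proof -
  have "card {e\<in>S. v \<in> set_uprod (ends H e)} \<noteq> 0"
    using assms by (subst card_0_eq) auto
  then show ?thesis by (simp add: degS_def)
qed

context glue begin

abbreviation c0 where "c0 S u \<equiv> cls G S u"
abbreviation c1 where "c1 S u \<equiv> cls Gc (T1 S) u"
abbreviation c2 where "c2 S u \<equiv> cls Cb (T2 S) u"

lemma iso_split:
  assumes S: "S \<subseteq> edges G" and b: "e0 \<in> S \<longleftrightarrow> ek \<in> S"
  shows "card {v\<in>verts G. degS G S v = 0} =
         card {v\<in>verts Gc. degS Gc (T1 S) v = 0} + card {v\<in>verts Cb. degS Cb (T2 S) v = 0}"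
proof -
  have "{v\<in>verts G. degS G S v = 0} = {v\<in>verts Gc. degS Gc (T1 S) v = 0} \<union> {v\<in>verts Cb. degS Cb (T2 S) v = 0}"
  proof (intro set_eqI)
    fix v show "v \<in> {v\<in>verts G. degS G S v = 0} \<longleftrightarrow> v \<in> {v\<in>verts Gc. degS Gc (T1 S) v = 0} \<union> {v\<in>verts Cb. degS Cb (T2 S) v = 0}"
      using deg1[OF S b, of v] deg2[OF S b, of v] Gc_V Cb_V WV by (cases "v \<in> W") auto
  qed
  moreover have "finite {v\<in>verts Gc. degS Gc (T1 S) v = 0}" "finite {v\<in>verts Cb. degS Cb (T2 S) v = 0}"
    using finV Gc_V Cb_V WV by (auto intro: finite_subset)
  moreover have "{v\<in>verts Gc. degS Gc (T1 S) v = 0} \<inter> {v\<in>verts Cb. degS Cb (T2 S) v = 0} = {}"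
    using Gc_V Cb_V by auto
  ultimately show ?thesis by (simp add: card_Un_disjoint)
qed

context
  fixes S assumes ec: "even_cover G S" and e0S: "e0 \<in> S"
begin

lemma S_E: "S \<subseteq> edges G" using ec by (simp add: even_cover_def)
lemma ekS: "ek \<in> S" using e0_ek_cover[OF ec] e0S by simp
lemma b_S: "e0 \<in> S \<longleftrightarrow> ek \<in> S" using e0_ek_cover[OF ec] .

lemma Rw_AA: "u \<notin> W \<Longrightarrow> v \<notin> W \<Longrightarrow> R S u v \<longleftrightarrow> R1 S u v"
proof
  assume a: "u \<notin> W" "v \<notin> W" "R S u v"
  have "R1 S (pi u) (pi v)" using proj[OF S_E e0S a(3)] by blast
  then show "R1 S u v" using a by (simp add: pi_def)
next
  assume a: "R1 S u v"
  have r: "R S x y" using Rxy[OF ec e0S] by blast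
  show "R S u v" using lift1[OF S_E subset_refl _, of u v] a r by blast
qed

lemma Rw_WW: "u \<in> W \<Longrightarrow> v \<in> W \<Longrightarrow> R S u v \<longleftrightarrow> R2 S u v"
proof
  assume a: "u \<in> W" "v \<in> W" "R S u v"
  have "R2 S (rho u) (rho v)" using proj[OF S_E e0S a(3)] by blast
  then show "R2 S u v" using a by (simp add: rho_def)
next
  assume a: "R2 S u v"
  have r: "R S x1 yk" using Rxy[OF ec e0S] by blast
  show "R S u v" using lift2[OF S_E subset_refl _, of u v] a r by blast
qed

lemma Rw_AW: "u \<notin> W \<Longrightarrow> v \<in> W \<Longrightarrow> R S u v \<longleftrightarrow> R1 S u x \<and> R2 S x1 v"
proof
  assume a: "u \<notin> W" "v \<in> W" "R S u v"
  have "R1 S (pi u) (pi v)" "R2 S (rho u) (rho v)" using proj[OF S_E e0S a(3)] by blast+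
  then show "R1 S u x \<and> R2 S x1 v" using a by (simp add: rho_def pi_def)
next
  assume a: "R1 S u x \<and> R2 S x1 v"
  have r: "R S x y" "R S x1 yk" using Rxy[OF ec e0S] by blast+
  have "R S u x" using lift1[OF S_E subset_refl _, of u x] a r by blast
  moreover have "R S x1 v" using lift2[OF S_E subset_refl _, of x1 v] a r by blast
  moreover have "R S x x1" using adj_e0[OF e0S] by auto
  ultimately show "R S u v" by (meson rtranclp_trans)
qed

lemma Rxx1: "R S x x1" using adj_e0[OF e0S] by auto

lemma cls_A_notx:
  assumes u: "u \<in> verts G" "u \<notin> W" and n: "\<not> R1 S u x"
  shows "c0 S u = c1 S u"
proof (intro set_eqI iffI)
  fix v assume "v \<in> c0 S u"
  then have v: "v \<in> verts G" "R S u v" unfolding cls_def by blast+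
  show "v \<in> c1 S u"
  proof (cases "v \<in> W")
    case True
    have "R1 S u x" using Rw_AW[OF u(2) True] v(2) by blast
    then show ?thesis using n by blast
  next
    case False
    have "R1 S u v" using Rw_AA[OF u(2) False] v(2) by blast
    moreover have "v \<in> verts Gc" using Gc_V v(1) False by blast
    ultimately show ?thesis unfolding cls_def by blast
  qed
next
  fix v assume "v \<in> c1 S u"
  then have v: "v \<in> verts Gc" "R1 S u v" unfolding cls_def by blast+
  have v2: "v \<in> verts G" "v \<notin> W" using v(1) Gc_V by blast+
  have "R S u v" using Rw_AA[OF u(2) v2(2)] v(2) by blast
  then show "v \<in> c0 S u" using v2 unfolding cls_def by blast
qed

lemma cls_W_notx1:
  assumes u: "u \<in> W" and n: "\<not> R2 S u x1"
  shows "c0 S u = c2 S u"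
proof (intro set_eqI iffI)
  fix v assume "v \<in> c0 S u"
  then have v: "v \<in> verts G" "R S u v" by (auto simp: cls_def)
  show "v \<in> c2 S u"
  proof (cases "v \<in> W")
    case True then show ?thesis using Rw_WW[OF u True] v Cb_V by (auto simp: cls_def)
  next
    case False
    have "R S v u" using v R_sym by metis
    then have "R2 S x1 u" using Rw_AW[OF False u] by auto
    then show ?thesis using n R_sym by metis
  qed
next
  fix v assume "v \<in> c2 S u"
  then have v: "v \<in> W" "R2 S u v" using Cb_V by (auto simp: cls_def)
  then show "v \<in> c0 S u" using Rw_WW[OF u v(1)] WV by (auto simp: cls_def)
qed

lemma comps_with:
  "comps G S = insert (c0 S x) ((comps Gc (T1 S) - {c1 S x}) \<union> (comps Cb (T2 S) - {c2 S x1}))"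
proof (intro equalityI subsetI)
  fix K assume "K \<in> comps G S"
  then obtain u where u: "u \<in> verts G" "K = c0 S u" by (auto simp: comps_cls)
  show "K \<in> insert (c0 S x) ((comps Gc (T1 S) - {c1 S x}) \<union> (comps Cb (T2 S) - {c2 S x1}))"
  proof (cases "u \<in> W")
    case False
    show ?thesis
    proof (cases "R1 S u x")
      case True
      then have "R S u x" using Rw_AA[OF False xW] by simp
      then have "K = c0 S x" using u cls_eq by metis
      then show ?thesis by simp
    next
      case nx: False
      have uc: "u \<in> verts Gc" using u False Gc_V by simp
      have "K = c1 S u" using cls_A_notx[OF u(1) False nx] u by simp
      moreover have "c1 S u \<noteq> c1 S x"
      proof
        assume "c1 S u = c1 S x"
        then have "u \<in> c1 S x" using cls_self[OF uc] by metis
        then have "R1 S x u" by (simp add: cls_def)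
        then show False using nx R_sym by metis
      qed
      ultimately show ?thesis using uc by (auto simp: comps_cls)
    qed
  next
    case True
    show ?thesis
    proof (cases "R2 S u x1")
      case r: True
      then have "R S u x1" using Rw_WW[OF True x1W] by simp
      then have "R S u x" using Rxx1 R_sym by (meson rtranclp_trans)
      then have "K = c0 S x" using u cls_eq by metis
      then show ?thesis by simp
    next
      case nx: False
      have uc: "u \<in> verts Cb" using True Cb_V by simp
      have "K = c2 S u" using cls_W_notx1[OF True nx] u by simp
      moreover have "c2 S u \<noteq> c2 S x1"
      proof
        assume "c2 S u = c2 S x1"
        then have "u \<in> c2 S x1" using cls_self[OF uc] by metis
        then have "R2 S x1 u" by (simp add: cls_def)
        then show False using nx R_sym by metis
      qed
      ultimately show ?thesis using uc by (auto simp: comps_cls)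
    qed
  qed
next
  fix K assume K: "K \<in> insert (c0 S x) ((comps Gc (T1 S) - {c1 S x}) \<union> (comps Cb (T2 S) - {c2 S x1}))"
  show "K \<in> comps G S"
  proof -
    consider "K = c0 S x" | "K \<in> comps Gc (T1 S)" "K \<noteq> c1 S x" | "K \<in> comps Cb (T2 S)" "K \<noteq> c2 S x1"
      using K by blast
    then show ?thesis
    proof cases
      case 1 then show ?thesis using xV by (auto simp: comps_cls)
    next
      case 2
      then obtain u where u: "u \<in> verts Gc" "K = c1 S u" by (auto simp: comps_cls)
      have uG: "u \<in> verts G" "u \<notin> W" using u Gc_V by auto
      have "\<not> R1 S u x"
      proof
        assume "R1 S u x" then have "c1 S u = c1 S x" by (rule cls_eq)
        then show False using 2 u by simp
      qed
      then have "K = c0 S u" using cls_A_notx[OF uG] u by simp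
      then show ?thesis using uG by (auto simp: comps_cls)
    next
      case 3
      then obtain u where u: "u \<in> verts Cb" "K = c2 S u" by (auto simp: comps_cls)
      have uG: "u \<in> verts G" "u \<in> W" using u Cb_V WV by auto
      have "\<not> R2 S u x1"
      proof
        assume "R2 S u x1" then have "c2 S u = c2 S x1" by (rule cls_eq)
        then show False using 3 u by simp
      qed
      then have "K = c0 S u" using cls_W_notx1[OF uG(2)] u by simp
      then show ?thesis using uG by (auto simp: comps_cls)
    qed
  qed
qed

lemma finS: "finite S" using S_E finE by (auto intro: finite_subset)

lemma degx: "degS G S x \<noteq> 0" by (rule degS_pos[OF finS e0S]) (simp add: ends_e0)
lemma degx1: "degS G S x1 \<noteq> 0" by (rule degS_pos[OF finS e0S]) (simp add: ends_e0)

lemma NT_with: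
  "NT G S = insert (c0 S x) ((NT Gc (T1 S) - {c1 S x}) \<union> (NT Cb (T2 S) - {c2 S x1}))"
proof -
  have A: "(\<exists>v\<in>K. degS G S v \<noteq> 0) \<longleftrightarrow> (\<exists>v\<in>K. degS Gc (T1 S) v \<noteq> 0)" if "K \<in> comps Gc (T1 S)" for K
  proof -
    have "K \<subseteq> verts G - W" using comps_sub[OF that] Gc_V by simp
    then show ?thesis using deg1[OF S_E b_S] by (metis Diff_iff subsetD)
  qed
  have B: "(\<exists>v\<in>K. degS G S v \<noteq> 0) \<longleftrightarrow> (\<exists>v\<in>K. degS Cb (T2 S) v \<noteq> 0)" if "K \<in> comps Cb (T2 S)" for K
  proof -
    have "K \<subseteq> W" using comps_sub[OF that] Cb_V by simp
    then show ?thesis using deg2[OF S_E b_S] by (metis subsetD)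
  qed
  have X: "x \<in> c0 S x" using cls_self xV by metis
  show ?thesis
    unfolding NT_def comps_with using A B X degx by blast
qed

lemma card_NT_with: "card (NT G S) + 1 = card (NT Gc (T1 S)) + card (NT Cb (T2 S))"
proof -
  have fin1: "finite (NT Gc (T1 S))" using wf_Gc by (simp add: finite_NT wf_graph_def)
  have fin2: "finite (NT Cb (T2 S))" using wf_Cb by (simp add: finite_NT wf_graph_def)
  have xc: "x \<in> verts Gc" using xV xW Gc_V by simp
  have x1c: "x1 \<in> verts Cb" using x1W Cb_V by simp
  have in1: "c1 S x \<in> NT Gc (T1 S)"
  proof -
    have "x \<in> c1 S x" by (rule cls_self[OF xc])
    moreover have "degS Gc (T1 S) x \<noteq> 0" using deg1[OF S_E b_S xW] degx by simp
    ultimately show ?thesis unfolding NT_def comps_cls using xc by blast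
  qed
  have in2: "c2 S x1 \<in> NT Cb (T2 S)"
  proof -
    have "x1 \<in> c2 S x1" by (rule cls_self[OF x1c])
    moreover have "degS Cb (T2 S) x1 \<noteq> 0" using deg2[OF S_E b_S x1W] degx1 by simp
    ultimately show ?thesis unfolding NT_def comps_cls using x1c by blast
  qed
  have disj: "(NT Gc (T1 S) - {c1 S x}) \<inter> (NT Cb (T2 S) - {c2 S x1}) = {}"
  proof -
    { fix K assume "K \<in> NT Gc (T1 S)" "K \<in> NT Cb (T2 S)"
      then have "K \<subseteq> verts Gc" "K \<subseteq> verts Cb" "K \<noteq> {}"
        by (auto simp: NT_def dest: comps_sub comps_ne)
      then have False using Gc_V Cb_V by auto }
    then show ?thesis by blast
  qed
  have notin: "c0 S x \<notin> (NT Gc (T1 S) - {c1 S x}) \<union> (NT Cb (T2 S) - {c2 S x1})"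
  proof
    have X: "x \<in> c0 S x" using cls_self xV by metis
    have X1: "x1 \<in> c0 S x" using Rxx1 x1W WV by (auto simp: cls_def)
    assume "c0 S x \<in> (NT Gc (T1 S) - {c1 S x}) \<union> (NT Cb (T2 S) - {c2 S x1})"
    then have "c0 S x \<subseteq> verts Gc \<or> c0 S x \<subseteq> verts Cb" by (auto simp: NT_def dest: comps_sub)
    then show False using X X1 Gc_V Cb_V xW x1W by auto
  qed
  have "card (NT G S) = Suc (card ((NT Gc (T1 S) - {c1 S x}) \<union> (NT Cb (T2 S) - {c2 S x1})))"
    unfolding NT_with using notin fin1 fin2 by (simp add: card_insert_if)
  also have "\<dots> = Suc (card (NT Gc (T1 S) - {c1 S x}) + card (NT Cb (T2 S) - {c2 S x1}))"
    using disj fin1 fin2 by (simp add: card_Un_disjoint)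
  also have "card (NT Gc (T1 S) - {c1 S x}) = card (NT Gc (T1 S)) - 1"
    by (rule card_Diff_singleton[OF in1])
  also have "card (NT Cb (T2 S) - {c2 S x1}) = card (NT Cb (T2 S)) - 1"
    by (rule card_Diff_singleton[OF in2])
  finally have eq: "card (NT G S) = Suc (card (NT Gc (T1 S)) - 1 + (card (NT Cb (T2 S)) - 1))" .
  have p1: "card (NT Gc (T1 S)) \<noteq> 0" using in1 fin1 by auto
  have p2: "card (NT Cb (T2 S)) \<noteq> 0" using in2 fin2 by auto
  show ?thesis using eq p1 p2 by linarith
qed

lemma exc_with_case: "exc_of G S + 2 = exc_of Gc (T1 S) + exc_of Cb (T2 S)"
  using card_NT_with iso_split[OF S_E b_S] by (simp add: exc_NT)

end

context
  fixes S assumes ec: "even_cover G S" and e0S: "e0 \<notin> S"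
begin

lemma S_E': "S \<subseteq> edges G" using ec by (simp add: even_cover_def)
lemma ekS': "ek \<notin> S" using e0_ek_cover[OF ec] e0S by simp
lemma b_S': "e0 \<in> S \<longleftrightarrow> ek \<in> S" using e0_ek_cover[OF ec] .

lemma cls0_A: assumes u: "u \<notin> W" shows "c0 S u = c1 S u"
proof (intro set_eqI iffI)
  fix v assume "v \<in> c0 S u"
  then have v: "v \<in> verts G" "R S u v" by (auto simp: cls_def)
  then show "v \<in> c1 S u" using proj0[OF S_E' e0S ekS' v(2)] u Gc_V by (auto simp: cls_def)
next
  fix v assume "v \<in> c1 S u"
  then have v: "v \<in> verts G" "R1 S u v" using Gc_V by (auto simp: cls_def)
  have "R S u v" by (rule lift1[OF S_E' subset_refl _ v(2)]) (simp add: None_T1 e0S)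
  then show "v \<in> c0 S u" using v by (auto simp: cls_def)
qed

lemma cls0_W: assumes u: "u \<in> W" shows "c0 S u = c2 S u"
proof (intro set_eqI iffI)
  fix v assume "v \<in> c0 S u"
  then have v: "v \<in> verts G" "R S u v" by (auto simp: cls_def)
  then show "v \<in> c2 S u" using proj0[OF S_E' e0S ekS' v(2)] u Cb_V by (auto simp: cls_def)
next
  fix v assume "v \<in> c2 S u"
  then have v: "v \<in> W" "R2 S u v" using Cb_V by (auto simp: cls_def)
  have "R S u v" by (rule lift2[OF S_E' subset_refl _ v(2)]) (simp add: None_T2 e0S)
  then show "v \<in> c0 S u" using v WV by (auto simp: cls_def)
qed

lemma comps_without: "comps G S = comps Gc (T1 S) \<union> comps Cb (T2 S)"
proof -
  have "comps G S = c0 S ` (verts G - W) \<union> c0 S ` W" using WV by (auto simp: comps_cls)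
  also have "c0 S ` (verts G - W) = comps Gc (T1 S)" using cls0_A Gc_V by (auto simp: comps_cls)
  also have "c0 S ` W = comps Cb (T2 S)" using cls0_W Cb_V by (auto simp: comps_cls)
  finally show ?thesis .
qed

lemma exc_without_case: "exc_of G S = exc_of Gc (T1 S) + exc_of Cb (T2 S)"
proof -
  have A: "(\<exists>v\<in>K. degS G S v \<noteq> 0) \<longleftrightarrow> (\<exists>v\<in>K. degS Gc (T1 S) v \<noteq> 0)" if "K \<in> comps Gc (T1 S)" for K
  proof -
    have "K \<subseteq> verts G - W" using comps_sub[OF that] Gc_V by simp
    then show ?thesis using deg1[OF S_E' b_S'] by (metis Diff_iff subsetD)
  qed
  have B: "(\<exists>v\<in>K. degS G S v \<noteq> 0) \<longleftrightarrow> (\<exists>v\<in>K. degS Cb (T2 S) v \<noteq> 0)" if "K \<in> comps Cb (T2 S)" for K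
  proof -
    have "K \<subseteq> W" using comps_sub[OF that] Cb_V by simp
    then show ?thesis using deg2[OF S_E' b_S'] by (metis subsetD)
  qed
  have NTeq: "NT G S = NT Gc (T1 S) \<union> NT Cb (T2 S)"
    unfolding NT_def comps_without using A B by blast
  have fin1: "finite (NT Gc (T1 S))" using wf_Gc by (simp add: finite_NT wf_graph_def)
  have fin2: "finite (NT Cb (T2 S))" using wf_Cb by (simp add: finite_NT wf_graph_def)
  have disj: "NT Gc (T1 S) \<inter> NT Cb (T2 S) = {}"
  proof -
    { fix K assume "K \<in> NT Gc (T1 S)" "K \<in> NT Cb (T2 S)"
      then have "K \<subseteq> verts Gc" "K \<subseteq> verts Cb" "K \<noteq> {}"
        by (auto simp: NT_def dest: comps_sub comps_ne)
      then have False using Gc_V Cb_V by auto }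
    then show ?thesis by blast
  qed
  have "card (NT G S) = card (NT Gc (T1 S)) + card (NT Cb (T2 S))"
    unfolding NTeq using fin1 fin2 disj by (simp add: card_Un_disjoint)
  then show ?thesis using iso_split[OF S_E' b_S'] by (simp add: exc_NT)
qed

end
end


lemma INF_attained:
  assumes "s \<in> A" "\<forall>t\<in>A. h s \<le> (h t::nat)"
  shows "(INF t\<in>A. ereal (real (h t))) = ereal (real (h s))"
proof (rule antisym)
  show "(INF t\<in>A. ereal (real (h t))) \<le> ereal (real (h s))" using assms(1) by (rule INF_lower)
  show "ereal (real (h s)) \<le> (INF t\<in>A. ereal (real (h t)))" using assms(2) by (intro INF_greatest) auto
qed

lemma ex_min: "A \<noteq> {} \<Longrightarrow> \<exists>s\<in>A. \<forall>t\<in>A. (h s::nat) \<le> h t"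
  using ex_has_least_nat[of "\<lambda>t. t \<in> A" _ h] by blast

lemma INF_nonneg: "(INF t\<in>A. ereal (real (h t))) \<ge> 0"
  by (intro INF_greatest) auto

lemma ereal_split:
  assumes "a \<noteq> -\<infinity>" "b \<noteq> -\<infinity>"
  shows "(a + b) - ereal (p + q) = (a - ereal p) + (b - ereal q)"
  using assms by (cases a; cases b) auto

lemma INF_empty_ereal: "(INF t\<in>{}. f t) = (\<infinity>::ereal)"
  by (simp add: top_ereal_def)

lemma nm1: "exc_with H f \<noteq> -\<infinity>"
proof -
  have "(INF S\<in>{S. even_cover H S \<and> f \<in> S}. ereal (real (exc_of H S))) \<ge> 0" by (rule INF_nonneg)
  then show ?thesis unfolding exc_with_def
    by (cases "(INF S\<in>{S. even_cover H S \<and> f \<in> S}. ereal (real (exc_of H S)))") auto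
qed

lemma nm2: "exc_without H f \<noteq> -\<infinity>"
proof -
  have "(INF S\<in>{S. even_cover H S \<and> f \<notin> S}. ereal (real (exc_of H S))) \<ge> 0" by (rule INF_nonneg)
  then show ?thesis unfolding exc_without_def by auto
qed

context glue begin

lemma exc_with_eq:
  assumes He: "\<And>S. even_cover G S \<Longrightarrow> e \<in> S \<longleftrightarrow> e0 \<in> S"
  shows "exc_with G e = exc_with Gc None + exc_with Cb None"
proof -
  define C0 where "C0 = {S. even_cover G S \<and> e \<in> S}"
  define C1 where "C1 = {T. even_cover Gc T \<and> None \<in> T}"
  define C2 where "C2 = {T. even_cover Cb T \<and> None \<in> T}"
  have e1: "exc_with G e = (INF S\<in>C0. ereal (real (exc_of G S))) - 2" by (simp add: exc_with_def C0_def)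
  have e2: "exc_with Gc None = (INF S\<in>C1. ereal (real (exc_of Gc S))) - 2" by (simp add: exc_with_def C1_def)
  have e3: "exc_with Cb None = (INF S\<in>C2. ereal (real (exc_of Cb S))) - 2" by (simp add: exc_with_def C2_def)
  have map: "S \<in> C0 \<Longrightarrow> T1 S \<in> C1 \<and> T2 S \<in> C2 \<and> exc_of G S + 2 = exc_of Gc (T1 S) + exc_of Cb (T2 S)" for S
  proof -
    assume "S \<in> C0"
    then have ec: "even_cover G S" and e0S: "e0 \<in> S" using He by (auto simp: C0_def)
    show ?thesis using ec_split[OF ec] e0S exc_with_case[OF ec e0S]
      by (simp add: C1_def C2_def None_T1 None_T2)
  qed
  have fin2: "(INF S\<in>C2. ereal (real (exc_of Cb S))) - 2 \<noteq> -\<infinity>"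
    using INF_nonneg[of "exc_of Cb" C2] by (cases "(INF S\<in>C2. ereal (real (exc_of Cb S)))") auto
  have fin1: "(INF S\<in>C1. ereal (real (exc_of Gc S))) - 2 \<noteq> -\<infinity>"
    using INF_nonneg[of "exc_of Gc" C1] by (cases "(INF S\<in>C1. ereal (real (exc_of Gc S)))") auto
  show ?thesis
  proof (cases "C1 = {} \<or> C2 = {}")
    case True
    then have "C0 = {}" using map by blast
    then have "exc_with G e = \<infinity>" using e1 by (simp add: top_ereal_def)
    moreover have "exc_with Gc None + exc_with Cb None = \<infinity>"
      using True e2 e3 fin1 fin2 by (auto simp: top_ereal_def)
    ultimately show ?thesis by simp
  next
    case False
    then obtain s1 s2 where s1: "s1 \<in> C1" "\<forall>t\<in>C1. exc_of Gc s1 \<le> exc_of Gc t"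
      and s2: "s2 \<in> C2" "\<forall>t\<in>C2. exc_of Cb s2 \<le> exc_of Cb t"
      using ex_min[of C1 "exc_of Gc"] ex_min[of C2 "exc_of Cb"] by blast
    have ec1: "even_cover Gc s1" "None \<in> s1" and ec2: "even_cover Cb s2" "None \<in> s2"
      using s1 s2 by (auto simp: C1_def C2_def)
    have N: "None \<in> s1 \<longleftrightarrow> None \<in> s2" using ec1 ec2 by simp
    define S0 where "S0 = glue s1 s2"
    have s1E: "s1 \<subseteq> edges Gc" "s2 \<subseteq> edges Cb" using ec1 ec2 by (auto simp: even_cover_def)
    note gp = glue_props[OF s1E N, folded S0_def]
    have ecS0: "even_cover G S0" unfolding S0_def by (rule ec_glue[OF ec1(1) ec2(1) N])
    have S0C: "S0 \<in> C0" using ecS0 gp ec1 He by (simp add: C0_def)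
    have exS0: "exc_of G S0 + 2 = exc_of Gc s1 + exc_of Cb s2"
      using map[OF S0C] gp by simp
    have minS0: "\<forall>t\<in>C0. exc_of G S0 \<le> exc_of G t"
    proof
      fix t assume "t \<in> C0"
      then have "T1 t \<in> C1" "T2 t \<in> C2" "exc_of G t + 2 = exc_of Gc (T1 t) + exc_of Cb (T2 t)"
        using map by blast+
      moreover have "exc_of Gc s1 \<le> exc_of Gc (T1 t)" "exc_of Cb s2 \<le> exc_of Cb (T2 t)"
        using s1 s2 calculation by blast+
      ultimately show "exc_of G S0 \<le> exc_of G t" using exS0 by linarith
    qed
    have i0: "(INF S\<in>C0. ereal (real (exc_of G S))) = ereal (real (exc_of G S0))"
      by (rule INF_attained[OF S0C minS0])
    have i1: "(INF S\<in>C1. ereal (real (exc_of Gc S))) = ereal (real (exc_of Gc s1))"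
      by (rule INF_attained[OF s1])
    have i2: "(INF S\<in>C2. ereal (real (exc_of Cb S))) = ereal (real (exc_of Cb s2))"
      by (rule INF_attained[OF s2])
    have r: "real (exc_of G S0) - 2 = (real (exc_of Gc s1) - 2) + (real (exc_of Cb s2) - 2)"
    proof -
      have "real (exc_of G S0 + 2) = real (exc_of Gc s1 + exc_of Cb s2)" using exS0 by simp
      then show ?thesis by simp
    qed
    show ?thesis unfolding e1 e2 e3 i0 i1 i2 using r by simp
  qed
qed

lemma exc_without_eq:
  assumes He: "\<And>S. even_cover G S \<Longrightarrow> e \<in> S \<longleftrightarrow> e0 \<in> S"
  shows "exc_without G e = exc_without Gc None + exc_without Cb None"
proof -
  define C0 where "C0 = {S. even_cover G S \<and> e \<notin> S}"
  define C1 where "C1 = {T. even_cover Gc T \<and> None \<notin> T}"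
  define C2 where "C2 = {T. even_cover Cb T \<and> None \<notin> T}"
  have e1: "exc_without G e = (INF S\<in>C0. ereal (real (exc_of G S)))" by (simp add: exc_without_def C0_def)
  have e2: "exc_without Gc None = (INF S\<in>C1. ereal (real (exc_of Gc S)))" by (simp add: exc_without_def C1_def)
  have e3: "exc_without Cb None = (INF S\<in>C2. ereal (real (exc_of Cb S)))" by (simp add: exc_without_def C2_def)
  have map: "S \<in> C0 \<Longrightarrow> T1 S \<in> C1 \<and> T2 S \<in> C2 \<and> exc_of G S = exc_of Gc (T1 S) + exc_of Cb (T2 S)" for S
  proof -
    assume "S \<in> C0"
    then have ec: "even_cover G S" and e0S: "e0 \<notin> S" using He by (auto simp: C0_def)
    show ?thesis using ec_split[OF ec] e0S exc_without_case[OF ec e0S]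
      by (simp add: C1_def C2_def None_T1 None_T2)
  qed
  have fin2: "(INF S\<in>C2. ereal (real (exc_of Cb S))) \<noteq> -\<infinity>"
    using INF_nonneg[of "exc_of Cb" C2] by auto
  have fin1: "(INF S\<in>C1. ereal (real (exc_of Gc S))) \<noteq> -\<infinity>"
    using INF_nonneg[of "exc_of Gc" C1] by auto
  show ?thesis
  proof (cases "C1 = {} \<or> C2 = {}")
    case True
    then have "C0 = {}" using map by blast
    then have "exc_without G e = \<infinity>" using e1 by (simp add: top_ereal_def)
    moreover have "exc_without Gc None + exc_without Cb None = \<infinity>"
      using True e2 e3 fin1 fin2 by (auto simp: top_ereal_def)
    ultimately show ?thesis by simp
  next
    case False
    then obtain s1 s2 where s1: "s1 \<in> C1" "\<forall>t\<in>C1. exc_of Gc s1 \<le> exc_of Gc t"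
      and s2: "s2 \<in> C2" "\<forall>t\<in>C2. exc_of Cb s2 \<le> exc_of Cb t"
      using ex_min[of C1 "exc_of Gc"] ex_min[of C2 "exc_of Cb"] by blast
    have ec1: "even_cover Gc s1" "None \<notin> s1" and ec2: "even_cover Cb s2" "None \<notin> s2"
      using s1 s2 by (auto simp: C1_def C2_def)
    have N: "None \<in> s1 \<longleftrightarrow> None \<in> s2" using ec1 ec2 by simp
    define S0 where "S0 = glue s1 s2"
    have s1E: "s1 \<subseteq> edges Gc" "s2 \<subseteq> edges Cb" using ec1 ec2 by (auto simp: even_cover_def)
    note gp = glue_props[OF s1E N, folded S0_def]
    have ecS0: "even_cover G S0" unfolding S0_def by (rule ec_glue[OF ec1(1) ec2(1) N])
    have S0C: "S0 \<in> C0" using ecS0 gp ec1 He by (simp add: C0_def)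
    have exS0: "exc_of G S0 = exc_of Gc s1 + exc_of Cb s2"
      using map[OF S0C] gp by simp
    have minS0: "\<forall>t\<in>C0. exc_of G S0 \<le> exc_of G t"
    proof
      fix t assume "t \<in> C0"
      then have "T1 t \<in> C1" "T2 t \<in> C2" "exc_of G t = exc_of Gc (T1 t) + exc_of Cb (T2 t)"
        using map by blast+
      moreover have "exc_of Gc s1 \<le> exc_of Gc (T1 t)" "exc_of Cb s2 \<le> exc_of Cb (T2 t)"
        using s1 s2 calculation by blast+
      ultimately show "exc_of G S0 \<le> exc_of G t" using exS0 by linarith
    qed
    have i0: "(INF S\<in>C0. ereal (real (exc_of G S))) = ereal (real (exc_of G S0))"
      by (rule INF_attained[OF S0C minS0])
    have i1: "(INF S\<in>C1. ereal (real (exc_of Gc S))) = ereal (real (exc_of Gc s1))"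
      by (rule INF_attained[OF s1])
    have i2: "(INF S\<in>C2. ereal (real (exc_of Cb S))) = ereal (real (exc_of Cb s2))"
      by (rule INF_attained[OF s2])
    show ?thesis unfolding e1 e2 e3 i0 i1 i2 using exS0 by simp
  qed
qed

lemma nn2_eq: "nn2 G = nn2 Gc + nn2 Cb"
proof -
  have T1E: "T1 (edges G) = edges Gc" using e0E EoutE by (auto simp: T1_def Gc_E opt_def)
  have T2E: "T2 (edges G) = edges Cb" using e0E EinE by (auto simp: T2_def Cb_E opt_def)
  have b: "e0 \<in> edges G \<longleftrightarrow> ek \<in> edges G" using e0E ekE by simp
  have d1: "v \<notin> W \<Longrightarrow> deg Gc v = deg G v" for v using deg1[OF subset_refl b] T1E by (simp add: deg_def)
  have d2: "v \<in> W \<Longrightarrow> deg Cb v = deg G v" for v using deg2[OF subset_refl b] T2E by (simp add: deg_def)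
  have finW: "finite W" using WV finV by (auto intro: finite_subset)
  have "card W \<le> card (verts G)" by (rule card_mono[OF finV WV])
  then have c1: "card (verts G) = card (verts Gc) + card (verts Cb)"
    using Gc_V Cb_V WV finV finW by (simp add: card_Diff_subset)
  have "{v\<in>verts G. deg G v = 2} = {v\<in>verts Gc. deg Gc v = 2} \<union> {v\<in>verts Cb. deg Cb v = 2}"
  proof (intro set_eqI)
    fix v show "v \<in> {v\<in>verts G. deg G v = 2} \<longleftrightarrow> v \<in> {v\<in>verts Gc. deg Gc v = 2} \<union> {v\<in>verts Cb. deg Cb v = 2}"
      using d1[of v] d2[of v] Gc_V Cb_V WV by (cases "v \<in> W") auto
  qed
  moreover have "finite {v\<in>verts Gc. deg Gc v = 2}" "finite {v\<in>verts Cb. deg Cb v = 2}"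
    using finV finW Gc_V Cb_V by auto
  moreover have "{v\<in>verts Gc. deg Gc v = 2} \<inter> {v\<in>verts Cb. deg Cb v = 2} = {}" using Gc_V Cb_V by auto
  ultimately have c2: "card {v\<in>verts G. deg G v = 2} = card {v\<in>verts Gc. deg Gc v = 2} + card {v\<in>verts Cb. deg Cb v = 2}"
    by (simp add: card_Un_disjoint)
  show ?thesis unfolding nn2_def using c1 c2 by simp
qed

lemma main:
  assumes He: "\<And>S. even_cover G S \<Longrightarrow> e \<in> S \<longleftrightarrow> e0 \<in> S"
  shows "delta G e = delta Gc None + delta Cb None \<and> delta_hat G e = delta_hat Gc None + delta_hat Cb None"
proof -
  have nn: "nn2 G / 4 = nn2 Gc / 4 + nn2 Cb / 4" using nn2_eq by simp
  have a: "exc_with G e = exc_with Gc None + exc_with Cb None" by (rule exc_with_eq[OF He])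
  have b: "exc_without G e = exc_without Gc None + exc_without Cb None" by (rule exc_without_eq[OF He])
  show ?thesis
    unfolding delta_def delta_hat_def a b nn
    using ereal_split[OF nm1[of Gc None] nm1[of Cb None]] ereal_split[OF nm2[of Gc None] nm2[of Cb None]]
    by simp
qed

end


lemma comp_closed:
  assumes "K \<in> comps H T" "a \<in> K" "f \<in> T" "ends H f = Upair a b" "b \<in> verts H"
  shows "b \<in> K"
proof -
  obtain u where u: "K = cls H T u" using assms(1) by (auto simp: comps_cls)
  have "(adjS H T)\<^sup>*\<^sup>* u a" using assms(2) u by (simp add: cls_def)
  moreover have "adjS H T a b" using assms(3,4) by (auto simp: adjS_def)
  ultimately have "(adjS H T)\<^sup>*\<^sup>* u b" by (rule rtranclp.rtrancl_into_rtrancl)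
  then show ?thesis using u assms(5) by (simp add: cls_def)
qed

locale chainctx =
  fixes G C :: "('v, 'e) mgraph" and x y :: 'v and es :: "'e list" and Bs :: "'v set list"
  assumes wfG: "wf_graph G" and ch: "chain_of G C x es Bs y"
begin

abbreviation "T \<equiv> edges C - set es"
abbreviation "m \<equiv> length es"

lemma sub: "subgraph C G" using ch by (simp add: chain_of_def)
lemma m2: "m \<ge> 2" using ch by (simp add: chain_of_def)
lemma sc: "subcubic_chain C x es Bs y" using ch by (simp add: chain_of_def)
lemma wfC: "wf_graph C" using sc by (simp add: subcubic_chain_def)
lemma lenB: "length Bs = m + 1" using sc by (simp add: subcubic_chain_def)
lemma dist_es: "distinct es" using sc by (simp add: subcubic_chain_def)
lemma dist_Bs: "distinct Bs" using sc by (simp add: subcubic_chain_def)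
lemma setBs: "set Bs = comps C T" using sc by (simp add: subcubic_chain_def)
lemma es_cut: "set es = {e. cut_edge C e}" using sc by (simp add: subcubic_chain_def)
lemma hdB: "hd Bs = {x}" using sc by (simp add: subcubic_chain_def)
lemma lastB: "last Bs = {y}" using sc by (simp add: subcubic_chain_def)
lemma link: "i < m \<Longrightarrow> \<exists>u\<in>Bs ! i. \<exists>v\<in>Bs ! (i + 1). ends C (es ! i) = Upair u v"
  using sc by (simp add: subcubic_chain_def)
lemma esC: "set es \<subseteq> edges C" using es_cut by (auto simp: cut_edge_def)
lemma subV: "verts C \<subseteq> verts G" and subE: "edges C \<subseteq> edges G"
  and subends: "f \<in> edges C \<Longrightarrow> ends C f = ends G f"
  using sub by (auto simp: subgraph_def)

lemma es_ne: "es \<noteq> []" using m2 by auto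
lemma Bs_ne: "Bs \<noteq> []" using lenB by auto
lemma B0: "Bs ! 0 = {x}" using hdB hd_conv_nth[OF Bs_ne] by simp
lemma Bm: "Bs ! m = {y}"
proof -
  have "Bs \<noteq> []" using lenB by auto
  then show ?thesis using lastB lenB by (simp add: last_conv_nth)
qed

lemma Bcomp: "j < length Bs \<Longrightarrow> Bs ! j \<in> comps C T" using setBs nth_mem by metis

lemma Bidx: "j < length Bs \<Longrightarrow> j' < length Bs \<Longrightarrow> a \<in> Bs ! j \<Longrightarrow> a \<in> Bs ! j' \<Longrightarrow> j = j'"
  using comps_disj[OF Bcomp Bcomp] dist_Bs nth_eq_iff_index_eq by metis

lemma BV: "j < length Bs \<Longrightarrow> Bs ! j \<subseteq> verts C" using comps_sub Bcomp by metis

lemma xin: "x \<in> Bs ! 0" and yin: "y \<in> Bs ! m" using B0 Bm by auto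

lemma xC: "x \<in> verts C" using BV[of 0] xin lenB by auto
lemma yC: "y \<in> verts C" using BV[of m] yin lenB by auto

lemma xy: "x \<noteq> y"
  using Bidx[of 0 m x] xin yin lenB m2 by auto

lemma not_xy: "j < length Bs \<Longrightarrow> 0 < j \<Longrightarrow> j < m \<Longrightarrow> a \<in> Bs ! j \<Longrightarrow> a \<noteq> x \<and> a \<noteq> y"
  using Bidx[of j 0 a] Bidx[of j m a] xin yin lenB by auto

lemma vert_in_B: "a \<in> verts C \<Longrightarrow> \<exists>j<length Bs. a \<in> Bs ! j"
proof -
  assume a: "a \<in> verts C"
  have "cls C T a \<in> set Bs" using setBs a by (auto simp: comps_cls)
  moreover have "a \<in> cls C T a" using cls_self[OF a] .
  ultimately show ?thesis by (metis in_set_conv_nth)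
qed

definition "x1 = (THE u. ends C (hd es) = Upair x u)"
definition "yk = (THE u. ends C (last es) = Upair u y)"

lemma hd_es: "hd es = es ! 0" using es_ne by (simp add: hd_conv_nth)
lemma last_es: "last es = es ! (m - 1)" using es_ne by (simp add: last_conv_nth)

lemma e0_ends: "ends C (hd es) = Upair x x1 \<and> x1 \<in> Bs ! 1"
proof -
  obtain u v where uv: "u \<in> Bs ! 0" "v \<in> Bs ! 1" "ends C (es ! 0) = Upair u v"
    using link[of 0] m2 by (metis add_0 less_le_trans zero_less_numeral)
  have u: "u = x" using uv B0 by simp
  have "(THE w. ends C (hd es) = Upair x w) = v"
    using uv u hd_es by (intro the_equality) auto
  then show ?thesis using uv u hd_es by (simp add: x1_def)
qed

lemma ek_ends: "ends C (last es) = Upair yk y \<and> yk \<in> Bs ! (m - 1)"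
proof -
  obtain u v where uv: "u \<in> Bs ! (m - 1)" "v \<in> Bs ! (m - 1 + 1)" "ends C (es ! (m - 1)) = Upair u v"
    using link[of "m - 1"] m2 by (metis diff_less less_le_trans zero_less_one zero_less_numeral)
  have "Suc (m - Suc 0) = m" using m2 by simp
  then have v: "v = y" using uv Bm by simp
  have "(THE w. ends C (last es) = Upair w y) = u"
    using uv v last_es by (intro the_equality) auto
  then show ?thesis using uv v last_es by (simp add: yk_def)
qed

abbreviation "W \<equiv> verts C - {x, y}"

lemma x1W: "x1 \<in> W"
proof -
  have "x1 \<in> Bs ! 1" using e0_ends by simp
  moreover have "1 < length Bs" "(0::nat) < 1" "1 < m" using lenB m2 by auto
  ultimately show ?thesis using not_xy[of 1 x1] BV[of 1] by auto
qed

lemma ykW: "yk \<in> W"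
proof -
  have "yk \<in> Bs ! (m - 1)" using ek_ends by simp
  moreover have "m - 1 < length Bs" "0 < m - 1" "m - 1 < m" using lenB m2 by auto
  ultimately show ?thesis using not_xy[of "m - 1" yk] BV[of "m - 1"] by auto
qed

lemma e0ek: "hd es \<noteq> last es"
proof -
  have "0 < m" "m - 1 < m" "0 \<noteq> m - 1" using m2 by auto
  then show ?thesis using dist_es hd_es last_es nth_eq_iff_index_eq by metis
qed

lemma e0E: "hd es \<in> edges C" and ekE: "last es \<in> edges C"
  using esC es_ne hd_in_set last_in_set by blast+

lemma W_comp: "W \<in> comps G (edges G - {hd es, last es})"
  using ch by (simp add: chain_of_def)

lemma Wset: "{f\<in>edges C. set_uprod (ends C f) \<inter> {x, y} = {}} =
       {f\<in>edges G - {hd es, last es}. set_uprod (ends G f) \<subseteq> W}"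
  using ch by (simp add: chain_of_def)

lemma split:
  assumes f: "f \<in> edges G" "f \<noteq> hd es" "f \<noteq> last es"
  shows "set_uprod (ends G f) \<subseteq> W \<or> set_uprod (ends G f) \<inter> W = {}"
proof (rule ccontr)
  assume "\<not> ?thesis"
  then obtain a b where ab: "a \<in> W" "b \<notin> W" "b \<in> set_uprod (ends G f)" "a \<in> set_uprod (ends G f)" by blast
  obtain c d where cd: "ends G f = Upair c d" by (cases "ends G f") auto
  have "set_uprod (ends G f) \<subseteq> verts G" using wfG f by (auto simp: wf_graph_def)
  then have "b \<in> verts G" using ab by auto
  moreover have "ends G f = Upair a b" using cd ab by auto
  ultimately have "b \<in> W" using comp_closed[OF W_comp ab(1), of f b] f by auto
  then show False using ab by simp
qed

sublocale g: glue G "contract_chain G C x y" "closure_chain C x es y" W x y x1 yk "hd es" "last es"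
  "{f\<in>edges G. set_uprod (ends G f) \<inter> W = {}}" "{f\<in>edges G - {hd es, last es}. set_uprod (ends G f) \<subseteq> W}"
proof
  show "wf_graph G" by (rule wfG)
  show "W \<subseteq> verts G" using subV by auto
  show "x \<in> verts G" "y \<in> verts G" using xC yC subV by auto
  show "x \<notin> W" "y \<notin> W" by auto
  show "x \<noteq> y" by (rule xy)
  show "x1 \<in> W" by (rule x1W)
  show "yk \<in> W" by (rule ykW)
  show "hd es \<in> edges G" "last es \<in> edges G" using e0E ekE subE by auto
  show "hd es \<noteq> last es" by (rule e0ek)
  show "ends G (hd es) = Upair x x1" using e0_ends subends[OF e0E] by simp
  show "ends G (last es) = Upair yk y" using ek_ends subends[OF ekE] by simp
  show "\<And>f. f \<in> edges G \<Longrightarrow> f \<noteq> hd es \<Longrightarrow> f \<noteq> last es \<Longrightarrow>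
      set_uprod (ends G f) \<subseteq> W \<or> set_uprod (ends G f) \<inter> W = {}" by (rule split)
  show "{f\<in>edges G. set_uprod (ends G f) \<inter> W = {}} = {f\<in>edges G. set_uprod (ends G f) \<inter> W = {}}" ..
  show "{f\<in>edges G - {hd es, last es}. set_uprod (ends G f) \<subseteq> W} =
        {f\<in>edges G - {hd es, last es}. set_uprod (ends G f) \<subseteq> W}" ..
  show "verts (contract_chain G C x y) = verts G - W" by (simp add: contract_chain_def)
  show "edges (contract_chain G C x y) = insert None (Some ` {f\<in>edges G. set_uprod (ends G f) \<inter> W = {}})"
    by (simp add: contract_chain_def)
  show "ends (contract_chain G C x y) None = Upair x y" by (simp add: contract_chain_def)
  show "\<And>f. f \<in> {f\<in>edges G. set_uprod (ends G f) \<inter> W = {}} \<Longrightarrow> ends (contract_chain G C x y) (Some f) = ends G f"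
    by (simp add: contract_chain_def)
  show "verts (closure_chain C x es y) = W" by (simp add: closure_chain_def Let_def)
  show "edges (closure_chain C x es y) = insert None (Some ` {f\<in>edges G - {hd es, last es}. set_uprod (ends G f) \<subseteq> W})"
    using Wset by (simp add: closure_chain_def Let_def)
  show "ends (closure_chain C x es y) None = Upair x1 yk"
    by (simp add: closure_chain_def Let_def x1_def yk_def)
  show "\<And>f. f \<in> {f\<in>edges G - {hd es, last es}. set_uprod (ends G f) \<subseteq> W} \<Longrightarrow>
      ends (closure_chain C x es y) (Some f) = ends G f"
  proof -
    fix f assume "f \<in> {f\<in>edges G - {hd es, last es}. set_uprod (ends G f) \<subseteq> W}"
    then have "f \<in> edges C" using Wset by blast
    then show "ends (closure_chain C x es y) (Some f) = ends G f"
      using subends by (simp add: closure_chain_def Let_def)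
  qed
qed


lemma He:
  assumes eS: "e \<in> set es" and ec: "even_cover G S"
  shows "e \<in> S \<longleftrightarrow> hd es \<in> S"
proof -
  obtain i where i: "i < m" "e = es ! i" using eS by (metis in_set_conv_nth)
  consider "i = 0" | "i = m - 1" | "0 < i" "i < m - 1" using i by linarith
  then show ?thesis
  proof cases
    case 1 then show ?thesis using i hd_es by simp
  next
    case 2 then show ?thesis using i last_es g.e0_ek_cover[OF ec] by simp
  next
    case 3
    define K where "K = {a. \<exists>j. 1 \<le> j \<and> j \<le> i \<and> a \<in> Bs ! j}"
    have kmem: "j < length Bs \<Longrightarrow> a \<in> Bs ! j \<Longrightarrow> a \<in> K \<longleftrightarrow> 1 \<le> j \<and> j \<le> i" for j a
    proof
      assume j: "j < length Bs" "a \<in> Bs ! j" and "a \<in> K"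
      then obtain j' where j': "1 \<le> j'" "j' \<le> i" "a \<in> Bs ! j'" by (auto simp: K_def)
      have "j' < length Bs" using j' i lenB by linarith
      then have "j = j'" using Bidx j j' by blast
      then show "1 \<le> j \<and> j \<le> i" using j' by simp
    next
      assume "j < length Bs" "a \<in> Bs ! j" "1 \<le> j \<and> j \<le> i"
      then show "a \<in> K" by (auto simp: K_def)
    qed
    have KW: "K \<subseteq> W"
    proof
      fix a assume "a \<in> K"
      then obtain j where j: "1 \<le> j" "j \<le> i" "a \<in> Bs ! j" by (auto simp: K_def)
      have jl: "j < length Bs" "0 < j" "j < m" using j 3 lenB by auto
      show "a \<in> W" using not_xy[OF jl j(3)] BV[OF jl(1)] j(3) by auto
    qed
    have finK: "finite K" using KW subV wfG finite_subset by (metis Diff_subset g.finV subset_trans)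
    have S: "S \<subseteq> edges G" using ec by (simp add: even_cover_def)
    have finS: "finite S" using S g.finE finite_subset by blast
    have ev: "\<forall>v\<in>K. even (degS G S v)"
    proof
      fix v assume "v \<in> K"
      then have "v \<in> verts G" using KW subV by auto
      then have "degS G S v = 0 \<or> degS G S v = 2" using ec by (simp add: even_cover_def)
      then show "even (degS G S v)" by auto
    qed
    have eC: "e \<in> edges C" using eS esC by auto
    have ehd: "e \<noteq> hd es"
    proof -
      have "0 < m" "i \<noteq> 0" using 3 by auto
      then show ?thesis using i dist_es hd_es nth_eq_iff_index_eq by metis
    qed
    have elast: "e \<noteq> last es"
    proof -
      have "m - 1 < m" "i \<noteq> m - 1" using 3 by auto
      then show ?thesis using i dist_es last_es nth_eq_iff_index_eq by metis
    qed
    have cross: "f \<in> edges G \<Longrightarrow> odd (inc K (ends G f)) \<longleftrightarrow> f = hd es \<or> f = e" for f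
    proof -
      assume fE: "f \<in> edges G"
      show ?thesis
      proof (cases "f = hd es")
        case True
        have "x \<notin> K" using kmem[of 0 x] xin lenB by auto
        moreover have "x1 \<in> K" using kmem[of 1 x1] e0_ends lenB m2 3 es_ne by auto
        ultimately show ?thesis using True g.ends_e0 by (simp add: odd_inc)
      next
        case nhd: False
        show ?thesis
        proof (cases "f = e")
          case True
          obtain u v where uv: "u \<in> Bs ! i" "v \<in> Bs ! (i + 1)" "ends C (es ! i) = Upair u v"
            using link[OF i(1)] by blast
          have "u \<in> K" using kmem[of i u] uv 3 lenB by auto
          moreover have "v \<notin> K" using kmem[of "i+1" v] uv 3 lenB by auto
          moreover have "ends G e = Upair u v" using uv i subends[OF eC] by simp
          ultimately show ?thesis using True by (simp add: odd_inc)
        next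
          case ne: False
          show ?thesis
          proof (cases "f = last es")
            case True
            have "yk \<notin> K" using kmem[of "m - 1" yk] ek_ends 3 lenB by auto
            moreover have "y \<notin> K" using kmem[of m y] yin 3 lenB by auto
            ultimately show ?thesis using True g.ends_ek nhd ne by (simp add: odd_inc)
          next
            case nlast: False
            obtain a b where ab: "ends G f = Upair a b" by (cases "ends G f") auto
            have "a \<in> K \<longleftrightarrow> b \<in> K"
            proof (cases "set_uprod (ends G f) \<subseteq> W")
              case False
              then have "set_uprod (ends G f) \<inter> W = {}" using split[OF fE nhd nlast] by blast
              then show ?thesis using ab KW by auto
            next
              case True
              then have fC: "f \<in> edges C" using Wset fE nhd nlast by blast
              have abC: "ends C f = Upair a b" using ab subends[OF fC] by simp
              show ?thesis
              proof (cases "f \<in> set es")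
                case True
                then obtain j where j: "j < m" "f = es ! j" by (metis in_set_conv_nth)
                obtain u v where uv: "u \<in> Bs ! j" "v \<in> Bs ! (j + 1)" "ends C (es ! j) = Upair u v"
                  using link[OF j(1)] by blast
                have j0: "j \<noteq> 0"
                proof
                  assume "j = 0" then show False using j nhd hd_es by simp
                qed
                have ji: "j \<noteq> i" using j ne i by auto
                have "u \<in> K \<longleftrightarrow> v \<in> K" using kmem[of j u] kmem[of "j+1" v] uv j lenB j0 ji by auto
                moreover have h: "ends C f = Upair u v" using uv j by simp
                moreover have "Upair a b = Upair u v" using abC h by (metis)
                ultimately show ?thesis by auto
              next
                case False
                have "set_uprod (ends C f) \<subseteq> verts C" using wfC fC by (auto simp: wf_graph_def)
                then have abV: "a \<in> verts C" "b \<in> verts C" using abC by auto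
                obtain j where j: "j < length Bs" "a \<in> Bs ! j" using vert_in_B[OF abV(1)] by blast
                have "b \<in> Bs ! j" using comp_closed[OF Bcomp[OF j(1)] j(2), of f b] False fC abC abV by auto
                then show ?thesis using kmem j by blast
              qed
            qed
            then show ?thesis using ab nhd ne by (simp add: odd_inc)
          qed
        qed
      qed
    qed
    have "{f\<in>S. odd (inc K (ends G f))} = S \<inter> {hd es, e}" using cross S by auto
    then have "even (card (S \<inter> {hd es, e}))" using parity[OF finS finK ev] by simp
    then show ?thesis using ehd by (cases "e \<in> S"; cases "hd es \<in> S") auto
  qed
qed

end

theorem proposition2p2:
  fixes G C :: "('v, 'e) mgraph" and x y :: 'v and es :: "'e list" and Bs :: "'v set list"
    and e :: 'e
  assumes "wf_graph G"
    and "chain_of G C x es Bs y"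
    and "e \<in> set es"
  shows "delta G e = delta (contract_chain G C x y) None + delta (closure_chain C x es y) None
       \<and> delta_hat G e = delta_hat (contract_chain G C x y) None
                         + delta_hat (closure_chain C x es y) None"
proof -
  interpret chainctx G C x y es Bs by unfold_locales (use assms in auto)
  show ?thesis by (rule g.main) (rule He[OF assms(3)])
qed


end
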